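(* Let $\hat f_{\text{PROS}}$ be the kernel density estimator based on a $\text{PROS}_{\boldsymbol{\alpha}}(n,L,s,D)$ sample of size $N=nL$ from $f$ and $\hat f_{\text{SRS}}$ the kernel density estimator based on an i.i.d. sample of size $N$ from $f$, and suppose the same bandwidth $h$ is used in both. Then, for large $N$, $$\mathrm{MISE}(\hat{f}_{\text{PROS}})=\mathrm{MISE}(\hat{f}_{\text{SRS}})-\frac1N\Delta(f,n)+O\Big(\frac{h^2}{N}\Big),\qquad \Delta(f,n)=\int\Big[\frac1n\sum_{j=1}^nf^2_{[d_j]}(x)-f^2(x)\Big]dx.$$
   Context: Let $f$ be a sufficiently smooth density with cdf $F$. Fix positive integers $s,n,L$ with $m=s/n$ an integer, and $d_j=\{(j-1)m+1,\dots,jm\}$. Let $\boldsymbol{\alpha}=(\alpha_{d_j,d_h})$ be an $n\times n$ doubly stochastic matrix of misplacement probabilities. $f_{(u:s)}(x)=\frac{s!}{(u-1)!(s-u)!}F(x)^{u-1}(1-F(x))^{s-u}f(x)$ and $f_{[d_j]}(x)=\frac1m\sum_{h=1}^n\sum_{u\in d_h}\alpha_{d_j,d_h}f_{(u:s)}(x)$. A $\text{PROS}_{\boldsymbol{\alpha}}(n,L,s,D)$ sample is a family of independent $X_{[d_j]i}$ ($j\le n$, $i\le L$) with $X_{[d_j]i}\sim f_{[d_j]}$. With $K$ a symmetric second-order kernel ($\int K=1$, $\int K^2<\infty$, $\int x^2K<\infty$): $\hat{f}_{\text{PROS}}(x)=\frac{1}{nLh}\sum_{i,j}K\big(\frac{x-X_{[d_j]i}}{h}\big)$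 and $\hat{f}_{\text{SRS}}(x)=\frac{1}{Nh}\sum_{k=1}^NK\big(\frac{x-X_k}{h}\big)$ with $X_k$ i.i.d. $\sim f$. $\mathrm{MISE}(\hat f)=\int\mathbb{E}(\hat f(x)-f(x))^2dx$. *)

theory Defs
  imports "HOL-Probability.Probability"
begin

definition cdf_of :: "(real \<Rightarrow> real) \<Rightarrow> real \<Rightarrow> real" where
  "cdf_of f x = (LINT t:{..x}|lborel. f t)"

definition ord_stat_dens :: "(real \<Rightarrow> real) \<Rightarrow> nat \<Rightarrow> nat \<Rightarrow> real \<Rightarrow> real" where
  "ord_stat_dens f s u x =
     fact s / (fact (u - 1) * fact (s - u)) * (cdf_of f x) ^ (u - 1)
       * (1 - cdf_of f x) ^ (s - u) * f x"

definition dblock :: "nat \<Rightarrow> nat \<Rightarrow> nat \<Rightarrow> nat set" where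
  "dblock s n j = {(j - 1) * (s div n) + 1 .. j * (s div n)}"

text \<open>Density f_[d_j] of a PROS observation from set j, with misplacement
  probabilities alpha j h (j, h in 1..n).\<close>
definition pros_dens ::
  "(real \<Rightarrow> real) \<Rightarrow> nat \<Rightarrow> nat \<Rightarrow> (nat \<Rightarrow> nat \<Rightarrow> real) \<Rightarrow> nat \<Rightarrow> real \<Rightarrow> real" where
  "pros_dens f s n \<alpha> j x =
     (1 / real (s div n)) * (\<Sum>h\<in>{1..n}. \<Sum>u\<in>dblock s n h. \<alpha> j h * ord_stat_dens f s u x)"

definition doubly_stochastic :: "nat \<Rightarrow> (nat \<Rightarrow> nat \<Rightarrow> real) \<Rightarrow> bool" where
  "doubly_stochastic n \<alpha> \<longleftrightarrow>
     (\<forall>j\<in>{1..n}. \<forall>h\<in>{1..n}. 0 \<le> \<alpha> j h) \<and>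
     (\<forall>j\<in>{1..n}. (\<Sum>h\<in>{1..n}. \<alpha> j h) = 1) \<and>
     (\<forall>h\<in>{1..n}. (\<Sum>j\<in>{1..n}. \<alpha> j h) = 1)"

definition pros_sample_measure ::
  "(real \<Rightarrow> real) \<Rightarrow> nat \<Rightarrow> nat \<Rightarrow> nat \<Rightarrow> (nat \<Rightarrow> nat \<Rightarrow> real) \<Rightarrow> ((nat \<times> nat) \<Rightarrow> real) measure" where
  "pros_sample_measure f s n L \<alpha> =
     PiM ({1..n} \<times> {1..L}) (\<lambda>(j, i). density lborel (\<lambda>x. ennreal (pros_dens f s n \<alpha> j x)))"

definition srs_sample_measure :: "(real \<Rightarrow> real) \<Rightarrow> nat \<Rightarrow> (nat \<Rightarrow> real) measure" where
  "srs_sample_measure f N = PiM {1..N} (\<lambda>_. density lborel (\<lambda>x. ennreal (f x)))"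

definition kde_pros ::
  "(real \<Rightarrow> real) \<Rightarrow> nat \<Rightarrow> nat \<Rightarrow> real \<Rightarrow> ((nat \<times> nat) \<Rightarrow> real) \<Rightarrow> real \<Rightarrow> real" where
  "kde_pros K n L h X x =
     (1 / (real n * real L * h)) * (\<Sum>j\<in>{1..n}. \<Sum>i\<in>{1..L}. K ((x - X (j, i)) / h))"

definition kde_srs :: "(real \<Rightarrow> real) \<Rightarrow> nat \<Rightarrow> real \<Rightarrow> (nat \<Rightarrow> real) \<Rightarrow> real \<Rightarrow> real" where
  "kde_srs K N h X x = (1 / (real N * h)) * (\<Sum>k\<in>{1..N}. K ((x - X k) / h))"

definition MISE_pros ::
  "(real \<Rightarrow> real) \<Rightarrow> (real \<Rightarrow> real) \<Rightarrow> nat \<Rightarrow> nat \<Rightarrow> nat \<Rightarrow> (nat \<Rightarrow> nat \<Rightarrow> real) \<Rightarrow> real \<Rightarrow> real" where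
  "MISE_pros f K s n L \<alpha> h =
     (LINT x|lborel. (LINT X|pros_sample_measure f s n L \<alpha>. (kde_pros K n L h X x - f x)\<^sup>2))"

definition MISE_srs :: "(real \<Rightarrow> real) \<Rightarrow> (real \<Rightarrow> real) \<Rightarrow> nat \<Rightarrow> real \<Rightarrow> real" where
  "MISE_srs f K N h =
     (LINT x|lborel. (LINT X|srs_sample_measure f N. (kde_srs K N h X x - f x)\<^sup>2))"

definition Delta_pros :: "(real \<Rightarrow> real) \<Rightarrow> nat \<Rightarrow> nat \<Rightarrow> (nat \<Rightarrow> nat \<Rightarrow> real) \<Rightarrow> real" where
  "Delta_pros f s n \<alpha> =
     (LINT x|lborel. (1 / real n) * (\<Sum>j\<in>{1..n}. (pros_dens f s n \<alpha> j x)\<^sup>2) - (f x)\<^sup>2)"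

end

theory Submission
  imports Defs
begin

lemma prod_int_single:
  assumes ps: "product_sigma_finite M" and fin: "finite I" and i: "i \<in> I"
    and pr: "\<And>l. l \<in> I \<Longrightarrow> prob_space (M l)"
    and g: "integrable (M i) (g :: _ \<Rightarrow> real)"
  shows "(\<integral>X. g (X i) \<partial>PiM I M) = (\<integral>x. g x \<partial>M i)"
proof -
  interpret product_sigma_finite M by (rule ps)
  define F where "F = (\<lambda>l. if l = i then g else (\<lambda>_. 1::real))"
  have intF: "\<And>l. l \<in> I \<Longrightarrow> integrable (M l) (F l)"
    using g pr by (auto simp: F_def prob_space_def finite_measure.integrable_const)
  have eq: "\<And>X. (\<Prod>l\<in>I. F l (X l)) = g (X i)"
    using fin i by (simp add: F_def prod.remove[OF fin i])
  have "(\<integral>X. (\<Prod>l\<in>I. F l (X l)) \<partial>PiM I M) = (\<Prod>l\<in>I. integral\<^sup>L (M l) (F l))"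
    by (rule product_integral_prod[OF fin intF])
  also have "\<dots> = integral\<^sup>L (M i) g"
    using fin i pr by (simp add: F_def prod.remove[OF fin i] prob_space.prob_space)
  finally show ?thesis by (simp add: eq)
qed

lemma prod_int_pair:
  assumes ps: "product_sigma_finite M" and fin: "finite I" and i: "i \<in> I" and k: "k \<in> I" and ik: "i \<noteq> k"
    and pr: "\<And>l. l \<in> I \<Longrightarrow> prob_space (M l)"
    and g: "integrable (M i) (g :: _ \<Rightarrow> real)" and g2: "integrable (M k) (g' :: _ \<Rightarrow> real)"
  shows "(\<integral>X. g (X i) * g' (X k) \<partial>PiM I M) = (\<integral>x. g x \<partial>M i) * (\<integral>x. g' x \<partial>M k)"
    and "integrable (PiM I M) (\<lambda>X. g (X i) * g' (X k))"
proof -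
  interpret product_sigma_finite M by (rule ps)
  define F where "F = (\<lambda>l. if l = i then g else if l = k then g' else (\<lambda>_. 1::real))"
  have intF: "\<And>l. l \<in> I \<Longrightarrow> integrable (M l) (F l)"
    using g g2 pr by (auto simp: F_def prob_space_def finite_measure.integrable_const)
  have k': "k \<in> I - {i}" using k ik by auto
  have eq: "\<And>X. (\<Prod>l\<in>I. F l (X l)) = g (X i) * g' (X k)"
    using fin i ik by (simp add: F_def prod.remove[OF fin i] prod.remove[OF _ k'])
  have "(\<integral>X. (\<Prod>l\<in>I. F l (X l)) \<partial>PiM I M) = (\<Prod>l\<in>I. integral\<^sup>L (M l) (F l))"
    by (rule product_integral_prod[OF fin intF])
  also have "\<dots> = integral\<^sup>L (M i) g * integral\<^sup>L (M k) g'"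
    using fin i pr ik by (simp add: F_def prod.remove[OF fin i] prod.remove[OF _ k'] prob_space.prob_space)
  finally show "(\<integral>X. g (X i) * g' (X k) \<partial>PiM I M) = (\<integral>x. g x \<partial>M i) * (\<integral>x. g' x \<partial>M k)" by (simp add: eq)
  show "integrable (PiM I M) (\<lambda>X. g (X i) * g' (X k))"
    using product_integrable_prod[OF fin intF] by (simp add: eq)
qed

lemma prod_integrable_single:
  assumes ps: "product_sigma_finite M" and fin: "finite I" and i: "i \<in> I"
    and pr: "\<And>l. l \<in> I \<Longrightarrow> prob_space (M l)"
    and g: "integrable (M i) (g :: _ \<Rightarrow> real)"
  shows "integrable (PiM I M) (\<lambda>X. g (X i))"
proof -
  interpret product_sigma_finite M by (rule ps)
  define F where "F = (\<lambda>l. if l = i then g else (\<lambda>_. 1::real))"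
  have intF: "\<And>l. l \<in> I \<Longrightarrow> integrable (M l) (F l)"
    using g pr by (auto simp: F_def prob_space_def finite_measure.integrable_const)
  have eq: "\<And>X. (\<Prod>l\<in>I. F l (X l)) = g (X i)"
    using fin i by (simp add: F_def prod.remove[OF fin i])
  show ?thesis using product_integrable_prod[OF fin intF] by (simp add: eq)
qed

lemma prod_sq_expect:
  fixes \<phi> :: "'i \<Rightarrow> 'a \<Rightarrow> real"
  assumes ps: "product_sigma_finite M" and fin: "finite I"
    and pr: "\<And>l. l \<in> I \<Longrightarrow> prob_space (M l)"
    and int1: "\<And>l. l \<in> I \<Longrightarrow> integrable (M l) (\<phi> l)"
    and int2: "\<And>l. l \<in> I \<Longrightarrow> integrable (M l) (\<lambda>x. (\<phi> l x)\<^sup>2)"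
  shows "(\<integral>X. (c + (\<Sum>l\<in>I. \<phi> l (X l)))\<^sup>2 \<partial>PiM I M) =
     (c + (\<Sum>l\<in>I. \<integral>x. \<phi> l x \<partial>M l))\<^sup>2 + (\<Sum>l\<in>I. (\<integral>x. (\<phi> l x)\<^sup>2 \<partial>M l) - (\<integral>x. \<phi> l x \<partial>M l)\<^sup>2)"
proof -
  interpret product_sigma_finite M by (rule ps)
  define \<mu> where "\<mu> l = (\<integral>x. \<phi> l x \<partial>M l)" for l
  define v where "v l = (\<integral>x. (\<phi> l x)\<^sup>2 \<partial>M l)" for l
  have pI: "prob_space (PiM I M)"
    using pr by (intro prob_space_PiM) auto
  have intc: "integrable (PiM I M) (\<lambda>X. c\<^sup>2)"
    using pI by (simp add: prob_space_def finite_measure.integrable_const)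
  have int_s: "\<And>l. l \<in> I \<Longrightarrow> integrable (PiM I M) (\<lambda>X. \<phi> l (X l))"
    by (rule prod_integrable_single[OF ps fin _ pr int1])
  have int_p: "\<And>l k. l \<in> I \<Longrightarrow> k \<in> I \<Longrightarrow> integrable (PiM I M) (\<lambda>X. \<phi> l (X l) * \<phi> k (X k))"
  proof -
    fix l k assume l: "l \<in> I" and k: "k \<in> I"
    show "integrable (PiM I M) (\<lambda>X. \<phi> l (X l) * \<phi> k (X k))"
    proof (cases "l = k")
      case True
      then show ?thesis using prod_integrable_single[OF ps fin l pr int2[OF l]] by (simp add: power2_eq_square)
    next
      case False
      then show ?thesis using prod_int_pair(2)[OF ps fin l k False pr int1[OF l] int1[OF k]] by simp
    qed
  qed
  have E_p: "\<And>l k. l \<in> I \<Longrightarrow> k \<in> I \<Longrightarrow> (\<integral>X. \<phi> l (X l) * \<phi> k (X k) \<partial>PiM I M) = (if l = k then v l else \<mu> l * \<mu> k)"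
  proof -
    fix l k assume l: "l \<in> I" and k: "k \<in> I"
    show "(\<integral>X. \<phi> l (X l) * \<phi> k (X k) \<partial>PiM I M) = (if l = k then v l else \<mu> l * \<mu> k)"
    proof (cases "l = k")
      case True
      then show ?thesis using prod_int_single[OF ps fin l pr int2[OF l]] by (simp add: power2_eq_square v_def)
    next
      case False
      then show ?thesis using prod_int_pair(1)[OF ps fin l k False pr int1[OF l] int1[OF k]] by (simp add: \<mu>_def)
    qed
  qed
  have expand: "\<And>X. (c + (\<Sum>l\<in>I. \<phi> l (X l)))\<^sup>2 = c\<^sup>2 + (\<Sum>l\<in>I. 2 * c * \<phi> l (X l)) + (\<Sum>l\<in>I. \<Sum>k\<in>I. \<phi> l (X l) * \<phi> k (X k))"
    by (simp add: power2_eq_square algebra_simps sum_distrib_left sum_distrib_right sum_product)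
  have "(\<integral>X. (c + (\<Sum>l\<in>I. \<phi> l (X l)))\<^sup>2 \<partial>PiM I M) =
     (\<integral>X. c\<^sup>2 \<partial>PiM I M) + (\<integral>X. (\<Sum>l\<in>I. 2 * c * \<phi> l (X l)) \<partial>PiM I M) + (\<integral>X. (\<Sum>l\<in>I. \<Sum>k\<in>I. \<phi> l (X l) * \<phi> k (X k)) \<partial>PiM I M)"
  proof -
    have a1: "integrable (PiM I M) (\<lambda>X. (\<Sum>l\<in>I. 2 * c * \<phi> l (X l)))"
      by (rule Bochner_Integration.integrable_sum, rule integrable_mult_right, erule int_s)
    have a2: "integrable (PiM I M) (\<lambda>X. (\<Sum>l\<in>I. \<Sum>k\<in>I. \<phi> l (X l) * \<phi> k (X k)))"
      using int_p by (intro Bochner_Integration.integrable_sum) auto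
    show ?thesis unfolding expand
      by (simp add: integral_add intc a1 a2 integrable_add)
  qed
  also have "\<dots> = c\<^sup>2 + (\<Sum>l\<in>I. 2 * c * \<mu> l) + (\<Sum>l\<in>I. \<Sum>k\<in>I. if l = k then v l else \<mu> l * \<mu> k)"
    using pI int_s int_p E_p prod_int_single[OF ps fin _ pr int1]
    by (simp add: Bochner_Integration.integral_sum prob_space.prob_space \<mu>_def cong: sum.cong)
  also have "(\<Sum>l\<in>I. \<Sum>k\<in>I. if l = k then v l else \<mu> l * \<mu> k) = (\<Sum>l\<in>I. \<Sum>k\<in>I. \<mu> l * \<mu> k) + (\<Sum>l\<in>I. v l - (\<mu> l)\<^sup>2)"
  proof -
    have "\<And>l. l \<in> I \<Longrightarrow> (\<Sum>k\<in>I. if l = k then v l else \<mu> l * \<mu> k) = (\<Sum>k\<in>I. \<mu> l * \<mu> k) + (v l - (\<mu> l)\<^sup>2)"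
    proof -
      fix l assume l: "l \<in> I"
      have "(\<Sum>k\<in>I. if l = k then v l else \<mu> l * \<mu> k) = (\<Sum>k\<in>I. \<mu> l * \<mu> k + (if l = k then v l - (\<mu> l)\<^sup>2 else 0))"
        by (intro sum.cong) (auto simp: power2_eq_square)
      also have "\<dots> = (\<Sum>k\<in>I. \<mu> l * \<mu> k) + (v l - (\<mu> l)\<^sup>2)"
        using fin l by (simp add: sum.distrib)
      finally show "(\<Sum>k\<in>I. if l = k then v l else \<mu> l * \<mu> k) = (\<Sum>k\<in>I. \<mu> l * \<mu> k) + (v l - (\<mu> l)\<^sup>2)" .
    qed
    then show ?thesis by (simp add: sum.distrib)
  qed
  finally show ?thesis unfolding \<mu>_def[symmetric] v_def[symmetric]
    by (simp add: power2_eq_square algebra_simps sum_distrib_left sum_distrib_right sum_product)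
qed


lemma cdf_props:
  fixes f :: "real \<Rightarrow> real"
  assumes f_nonneg: "\<And>x. 0 \<le> f x"
    and f_int: "integrable lborel f" and f_one: "(LINT x|lborel. f x) = 1"
    and f_cont: "\<And>x. isCont f x"
  shows "prob_space (density lborel (\<lambda>x. ennreal (f x)))"
    and "\<And>x. 0 \<le> cdf_of f x" and "\<And>x. cdf_of f x \<le> 1"
    and "(cdf_of f \<longlongrightarrow> 1) at_top" and "(cdf_of f \<longlongrightarrow> 0) at_bot"
    and "\<And>x. (cdf_of f has_real_derivative f x) (at x)"
proof -
  have fm[measurable]: "f \<in> borel_measurable borel"
    using f_int by auto
  define D where "D = density lborel (\<lambda>x. ennreal (f x))"
  have "emeasure D (space D) = (\<integral>\<^sup>+ x. ennreal (f x) \<partial>lborel)"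
    by (simp add: D_def emeasure_density)
  also have "\<dots> = ennreal 1"
    using nn_integral_eq_integral[OF f_int] f_nonneg f_one by simp
  finally have pD: "prob_space D" by (intro prob_spaceI) simp
  then show "prob_space (density lborel (\<lambda>x. ennreal (f x)))" by (simp add: D_def)
  interpret D: prob_space D by (rule pD)
  interpret real_distribution D
    by standard (simp add: D_def)
  have cdfeq: "cdf D x = cdf_of f x" for x
  proof -
    have "cdf D x = measure D {..x}" by (simp add: cdf_def)
    also have "\<dots> = integral\<^sup>L D (indicator {..x})"
      by (simp add: D_def)
    also have "\<dots> = (\<integral>t. f t * indicator {..x} t \<partial>lborel)"
      unfolding D_def by (subst integral_density) (auto simp: f_nonneg)
    also have "\<dots> = cdf_of f x"
      by (simp add: cdf_of_def set_lebesgue_integral_def mult.commute)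
    finally show ?thesis .
  qed
  show "0 \<le> cdf_of f x" for x using cdfeq[of x] cdf_nonneg by metis
  show "cdf_of f x \<le> 1" for x using cdfeq[of x] cdf_bounded_prob by metis
  have cdfeq': "cdf D = cdf_of f" using cdfeq by (simp add: fun_eq_iff)
  show "(cdf_of f \<longlongrightarrow> 1) at_top" using cdf_lim_at_top_prob unfolding cdfeq' .
  show "(cdf_of f \<longlongrightarrow> 0) at_bot" using cdf_lim_at_bot unfolding cdfeq' .
  have si: "\<And>A. A \<in> sets borel \<Longrightarrow> set_integrable lborel A f"
    unfolding set_integrable_def by (rule integrable_mult_indicator) (auto simp: f_int)
  have split: "cdf_of f y = cdf_of f a + (LBINT t=a..y. f t)" if "a \<le> y" for a y
  proof -
    have "{..y} = {..a} \<union> {a<..y}" using that by auto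
    then have "cdf_of f y = (LINT t:{..a}|lborel. f t) + (LINT t:{a<..y}|lborel. f t)"
      unfolding cdf_of_def by (simp only:) (rule set_integral_Un, auto intro: si)
    then show ?thesis using that by (simp add: cdf_of_def interval_integral_Ioc)
  qed
  show "(cdf_of f has_real_derivative f x) (at x)" for x
  proof -
    let ?a = "x - 1" and ?b = "x + 1"
    have cont: "continuous_on {?a..?b} f" using f_cont by (simp add: continuous_at_imp_continuous_on)
    have "((\<lambda>u. LBINT y=?a..u. f y) has_vector_derivative (f x)) (at x within {?a..?b})"
      by (rule interval_integral_FTC2[OF _ _ cont]) auto
    then have d1: "((\<lambda>u. LBINT y=?a..u. f y) has_real_derivative (f x)) (at x)"
      by (simp add: has_real_derivative_iff_has_vector_derivative at_within_Icc_at)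
    then have d2: "((\<lambda>u. cdf_of f ?a + (LBINT y=?a..u. f y)) has_real_derivative (f x)) (at x)"
      using DERIV_add[OF DERIV_const d1] by simp
    show ?thesis
    proof (rule has_field_derivative_transform_within_open[OF d2, of "{?a<..<?b}"])
      fix u assume "u \<in> {?a<..<?b}"
      then have "?a \<le> u" by auto
      then show "cdf_of f ?a + (LBINT y=?a..u. f y) = cdf_of f u"
        by (rule split[symmetric])
    qed auto
  qed
qed


definition sm2 :: "(real \<Rightarrow> real) \<Rightarrow> bool" where
  "sm2 g \<longleftrightarrow> (\<exists>g1 g2 B. (\<forall>x. (g has_real_derivative g1 x) (at x)) \<and>
     (\<forall>x. (g1 has_real_derivative g2 x) (at x)) \<and> (\<forall>x. \<bar>g x\<bar> \<le> B \<and> \<bar>g1 x\<bar> \<le> B \<and> \<bar>g2 x\<bar> \<le> B))"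

lemma sm2_const: "sm2 (\<lambda>x. c)"
  unfolding sm2_def
  by (rule exI[of _ "\<lambda>_. 0"], rule exI[of _ "\<lambda>_. 0"], rule exI[of _ "\<bar>c\<bar>"]) auto

lemma sm2_add: assumes "sm2 g" "sm2 h" shows "sm2 (\<lambda>x. g x + h x)"
proof -
  obtain g1 g2 B where g: "\<forall>x. (g has_real_derivative g1 x) (at x)" "\<forall>x. (g1 has_real_derivative g2 x) (at x)"
    "\<forall>x. \<bar>g x\<bar> \<le> B \<and> \<bar>g1 x\<bar> \<le> B \<and> \<bar>g2 x\<bar> \<le> B" using assms(1) unfolding sm2_def by blast
  obtain h1 h2 C where h: "\<forall>x. (h has_real_derivative h1 x) (at x)" "\<forall>x. (h1 has_real_derivative h2 x) (at x)"
    "\<forall>x. \<bar>h x\<bar> \<le> C \<and> \<bar>h1 x\<bar> \<le> C \<and> \<bar>h2 x\<bar> \<le> C" using assms(2) unfolding sm2_def by blast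
  show ?thesis unfolding sm2_def
  proof (intro exI conjI allI)
    fix x
    show "((\<lambda>x. g x + h x) has_real_derivative g1 x + h1 x) (at x)" using g h by (auto intro!: derivative_eq_intros)
    show "((\<lambda>x. g1 x + h1 x) has_real_derivative g2 x + h2 x) (at x)" using g h by (auto intro!: derivative_eq_intros)
    show "\<bar>g x + h x\<bar> \<le> B + C" "\<bar>g1 x + h1 x\<bar> \<le> B + C" "\<bar>g2 x + h2 x\<bar> \<le> B + C"
      using g(3) h(3) by (auto intro: abs_triangle_ineq[THEN order_trans] add_mono simp: spec[of _ x])
  qed
qed

lemma sm2_mult: assumes "sm2 g" "sm2 h" shows "sm2 (\<lambda>x. g x * h x)"
proof -
  obtain g1 g2 B where g: "\<forall>x. (g has_real_derivative g1 x) (at x)" "\<forall>x. (g1 has_real_derivative g2 x) (at x)"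
    "\<forall>x. \<bar>g x\<bar> \<le> B \<and> \<bar>g1 x\<bar> \<le> B \<and> \<bar>g2 x\<bar> \<le> B" using assms(1) unfolding sm2_def by blast
  obtain h1 h2 C where h: "\<forall>x. (h has_real_derivative h1 x) (at x)" "\<forall>x. (h1 has_real_derivative h2 x) (at x)"
    "\<forall>x. \<bar>h x\<bar> \<le> C \<and> \<bar>h1 x\<bar> \<le> C \<and> \<bar>h2 x\<bar> \<le> C" using assms(2) unfolding sm2_def by blast
  have B0: "0 \<le> B" using g(3) by (meson abs_ge_zero order_trans)
  have C0: "0 \<le> C" using h(3) by (meson abs_ge_zero order_trans)
  have pb: "\<bar>a * b\<bar> \<le> B * C" if "\<bar>a\<bar> \<le> B" "\<bar>b\<bar> \<le> C" for a b
    using that by (simp add: abs_mult mult_mono B0 C0)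
  show ?thesis unfolding sm2_def
  proof (intro exI conjI allI)
    fix x
    show "((\<lambda>x. g x * h x) has_real_derivative g1 x * h x + g x * h1 x) (at x)" using g h by (auto intro!: derivative_eq_intros)
    show "((\<lambda>x. g1 x * h x + g x * h1 x) has_real_derivative (g2 x * h x + g1 x * h1 x) + (g1 x * h1 x + g x * h2 x)) (at x)"
      using g h by (auto intro!: derivative_eq_intros)
    have a: "\<bar>g x\<bar> \<le> B" "\<bar>g1 x\<bar> \<le> B" "\<bar>g2 x\<bar> \<le> B" "\<bar>h x\<bar> \<le> C" "\<bar>h1 x\<bar> \<le> C" "\<bar>h2 x\<bar> \<le> C"
      using g(3) h(3) by auto
    show "\<bar>g x * h x\<bar> \<le> 4 * B * C" using pb[OF a(1) a(4)] mult_nonneg_nonneg[OF B0 C0] by linarith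
    show "\<bar>g1 x * h x + g x * h1 x\<bar> \<le> 4 * B * C" using pb[OF a(2) a(4)] pb[OF a(1) a(5)] mult_nonneg_nonneg[OF B0 C0] by linarith
    show "\<bar>(g2 x * h x + g1 x * h1 x) + (g1 x * h1 x + g x * h2 x)\<bar> \<le> 4 * B * C"
      using pb[OF a(3) a(4)] pb[OF a(2) a(5)] pb[OF a(1) a(6)] by linarith
  qed
qed

lemma sm2_sum: "finite A \<Longrightarrow> (\<And>i. i \<in> A \<Longrightarrow> sm2 (g i)) \<Longrightarrow> sm2 (\<lambda>x. \<Sum>i\<in>A. g i x)"
  by (induction A rule: finite_induct) (auto intro: sm2_add sm2_const)

lemma sm2_pow: "sm2 g \<Longrightarrow> sm2 (\<lambda>x. (g x) ^ k)"
  by (induction k) (auto intro: sm2_mult sm2_const)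

lemma mvt_between:
  fixes g g1 :: "real \<Rightarrow> real"
  assumes d1: "\<And>x. (g has_real_derivative g1 x) (at x)"
  shows "\<exists>z. \<bar>z - x\<bar> \<le> \<bar>t\<bar> \<and> g (x + t) - g x = t * g1 z"
proof (cases "t = 0")
  case True then show ?thesis by (intro exI[of _ x]) simp
next
  case False
  then consider "x < x + t" | "x + t < x" by linarith
  then show ?thesis
  proof cases
    case 1
    obtain z where z: "x < z" "z < x + t" "g (x + t) - g x = (x + t - x) * g1 z" using MVT2[OF 1, of g g1] d1 by blast
    then show ?thesis by (intro exI[of _ z]) auto
  next
    case 2
    obtain z where z: "x + t < z" "z < x" "g x - g (x + t) = (x - (x + t)) * g1 z" using MVT2[OF 2, of g g1] d1 by blast
    then show ?thesis by (intro exI[of _ z]) (auto simp: algebra_simps)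
  qed
qed

lemma taylor2:
  fixes g g1 g2 :: "real \<Rightarrow> real"
  assumes d1: "\<And>x. (g has_real_derivative g1 x) (at x)" and d2: "\<And>x. (g1 has_real_derivative g2 x) (at x)"
    and b: "\<And>x. \<bar>g2 x\<bar> \<le> B"
  shows "\<bar>g (x + t) - g x - t * g1 x\<bar> \<le> B * t\<^sup>2"
proof -
  have B0: "0 \<le> B" using b[of 0] by linarith
  obtain z where z: "\<bar>z - x\<bar> \<le> \<bar>t\<bar>" "g (x + t) - g x = t * g1 z" using mvt_between[OF d1] by blast
  obtain w where w: "\<bar>w - x\<bar> \<le> \<bar>z - x\<bar>" "g1 (x + (z - x)) - g1 x = (z - x) * g2 w" using mvt_between[OF d2] by blast
  have w2: "g1 z - g1 x = (z - x) * g2 w" using w(2) by simp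
  have "g (x + t) - g x - t * g1 x = t * (g1 z - g1 x)" using z(2) by (simp add: algebra_simps)
  also have "\<dots> = t * ((z - x) * g2 w)" by (simp only: w2)
  finally have "\<bar>g (x + t) - g x - t * g1 x\<bar> = \<bar>t\<bar> * \<bar>z - x\<bar> * \<bar>g2 w\<bar>"
    by (simp add: abs_mult)
  also have "\<dots> \<le> \<bar>t\<bar> * \<bar>t\<bar> * B"
    using z(1) b[of w] B0 by (intro mult_mono) (auto intro: mult_left_mono)
  finally show ?thesis by (simp add: power2_eq_square abs_mult_self mult.commute)
qed


definition conv :: "(real \<Rightarrow> real) \<Rightarrow> real \<Rightarrow> (real \<Rightarrow> real) \<Rightarrow> real \<Rightarrow> real" where
  "conv Q h g x = (LINT t|lborel. Q t * g (x - h * t))"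

lemma integrable_bdd_mult:
  fixes Q g :: "real \<Rightarrow> real"
  assumes Q: "integrable lborel Q" and gm: "g \<in> borel_measurable borel" and gb: "\<And>y. \<bar>g y\<bar> \<le> B"
  shows "integrable lborel (\<lambda>t. Q t * g t)"
proof (rule Bochner_Integration.integrable_bound[OF integrable_mult_right[OF integrable_abs[OF Q], of B]])
  show "(\<lambda>t. Q t * g t) \<in> borel_measurable lborel" using Q gm by auto
  show "AE t in lborel. norm (Q t * g t) \<le> norm (B * \<bar>Q t\<bar>)"
  proof (intro AE_I2)
    fix t
    have "\<bar>g t\<bar> \<le> \<bar>B\<bar>" using gb[of t] by linarith
    then have "\<bar>Q t\<bar> * \<bar>g t\<bar> \<le> \<bar>Q t\<bar> * \<bar>B\<bar>" by (rule mult_left_mono) simp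
    then show "norm (Q t * g t) \<le> norm (B * \<bar>Q t\<bar>)" by (simp add: abs_mult mult.commute)
  qed
qed

lemma conv_integrable_t:
  fixes Q g :: "real \<Rightarrow> real"
  assumes Q: "integrable lborel Q" and gm: "g \<in> borel_measurable borel" and gb: "\<And>y. \<bar>g y\<bar> \<le> B"
  shows "integrable lborel (\<lambda>t. Q t * g (x - h * t))"
  by (rule integrable_bdd_mult[OF Q _ gb]) (use gm in measurable)

lemma conv_bdd:
  fixes Q g :: "real \<Rightarrow> real"
  assumes Q: "integrable lborel Q" and gm: "g \<in> borel_measurable borel" and gb: "\<And>y. \<bar>g y\<bar> \<le> B"
  shows "\<bar>conv Q h g x\<bar> \<le> B * (LINT t|lborel. \<bar>Q t\<bar>)"
proof -
  have "\<bar>conv Q h g x\<bar> \<le> (LINT t|lborel. \<bar>Q t * g (x - h * t)\<bar>)"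
    unfolding conv_def by (rule integral_abs_bound)
  also have "\<dots> \<le> (LINT t|lborel. B * \<bar>Q t\<bar>)"
  proof (rule integral_mono)
    show "integrable lborel (\<lambda>t. \<bar>Q t * g (x - h * t)\<bar>)" using conv_integrable_t[OF Q gm gb] by (rule integrable_abs)
    show "integrable lborel (\<lambda>t. B * \<bar>Q t\<bar>)" using Q by simp
    fix t
    have "\<bar>Q t\<bar> * \<bar>g (x - h * t)\<bar> \<le> \<bar>Q t\<bar> * B" by (rule mult_left_mono[OF gb]) simp
    then show "\<bar>Q t * g (x - h * t)\<bar> \<le> B * \<bar>Q t\<bar>" by (simp add: abs_mult mult.commute)
  qed
  finally show ?thesis by simp
qed

lemma conv_fubini:
  fixes Q g :: "real \<Rightarrow> real"
  assumes Q: "integrable lborel Q" and g: "integrable lborel g"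
  shows "integrable lborel (conv Q h g)"
    and "(LINT x|lborel. \<bar>conv Q h g x\<bar>) \<le> (LINT t|lborel. \<bar>Q t\<bar>) * (LINT y|lborel. \<bar>g y\<bar>)"
proof -
  have Qm[measurable]: "Q \<in> borel_measurable borel" using Q by auto
  have gm[measurable]: "g \<in> borel_measurable borel" using g by auto
  define F where "F = (\<lambda>(t::real, x::real). Q t * g (x - h * t))"
  have Fm[measurable]: "F \<in> borel_measurable (lborel \<Otimes>\<^sub>M lborel)"
    unfolding F_def by measurable
  have transl: "(LINT x|lborel. G (x - h * t)) = (LINT y|lborel. G y)" for G :: "real \<Rightarrow> real" and t
    using lborel_integral_real_affine[of 1 G "- h * t"] by simp
  have transl_int: "integrable lborel (\<lambda>x. G (x - h * t))" if "integrable lborel G" for G :: "real \<Rightarrow> real" and t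
    using lborel_integrable_real_affine[OF that, of 1 "- h * t"] by simp
  have inner: "(LINT x|lborel. norm (F (t, x))) = \<bar>Q t\<bar> * (LINT y|lborel. \<bar>g y\<bar>)" for t
    unfolding F_def by (simp add: abs_mult transl[of "\<lambda>y. \<bar>g y\<bar>"])
  have Fint: "integrable (lborel \<Otimes>\<^sub>M lborel) F"
  proof (rule lborel_pair.Fubini_integrable[OF Fm])
    show "integrable lborel (\<lambda>t. LINT x|lborel. norm (F (t, x)))"
      unfolding inner by (intro integrable_mult_left integrable_abs Q)
    show "AE t in lborel. integrable lborel (\<lambda>x. F (t, x))"
    proof (intro AE_I2)
      fix t
      have "integrable lborel (\<lambda>x. Q t * g (x - h * t))" by (intro integrable_mult_right transl_int g)
      then show "integrable lborel (\<lambda>x. F (t, x))" by (simp add: F_def)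
    qed
  qed
  then have Fint': "integrable (lborel \<Otimes>\<^sub>M lborel) (\<lambda>(t,x). Q t * g (x - h * t))"
    by (simp add: F_def)
  show "integrable lborel (conv Q h g)"
    using lborel_pair.integrable_snd[OF Fint'] by (simp add: conv_def[abs_def])
  have Fabs: "integrable (lborel \<Otimes>\<^sub>M lborel) (\<lambda>(t,x). \<bar>Q t * g (x - h * t)\<bar>)"
    using integrable_abs[OF Fint] by (simp add: F_def case_prod_unfold)
  have "(LINT x|lborel. \<bar>conv Q h g x\<bar>) \<le> (LINT x|lborel. (LINT t|lborel. \<bar>Q t * g (x - h * t)\<bar>))"
  proof (rule integral_mono)
    show "integrable lborel (\<lambda>x. \<bar>conv Q h g x\<bar>)"
      using lborel_pair.integrable_snd[OF Fint'] by (intro integrable_abs) (simp add: conv_def[abs_def])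
    show "integrable lborel (\<lambda>x. LINT t|lborel. \<bar>Q t * g (x - h * t)\<bar>)"
      using lborel_pair.integrable_snd[OF Fabs] by simp
    show "\<And>x. \<bar>conv Q h g x\<bar> \<le> (LINT t|lborel. \<bar>Q t * g (x - h * t)\<bar>)"
      unfolding conv_def by (rule integral_abs_bound)
  qed
  also have "\<dots> = (LINT t|lborel. (LINT x|lborel. \<bar>Q t * g (x - h * t)\<bar>))"
    using lborel_pair.integral_snd[OF Fabs] lborel_pair.integral_fst[OF Fabs] by simp
  also have "\<dots> = (LINT t|lborel. \<bar>Q t\<bar> * (LINT y|lborel. \<bar>g y\<bar>))"
    using inner by (simp add: F_def)
  also have "\<dots> = (LINT t|lborel. \<bar>Q t\<bar>) * (LINT y|lborel. \<bar>g y\<bar>)" by simp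
  finally show "(LINT x|lborel. \<bar>conv Q h g x\<bar>) \<le> (LINT t|lborel. \<bar>Q t\<bar>) * (LINT y|lborel. \<bar>g y\<bar>)" .
qed

lemma dens_expect:
  fixes Q g :: "real \<Rightarrow> real"
  assumes Q: "integrable lborel Q" and gm: "g \<in> borel_measurable borel" and gb: "\<And>y. \<bar>g y\<bar> \<le> B"
    and g0: "\<And>y. 0 \<le> g y" and h: "0 < h"
  shows "integrable (density lborel (\<lambda>y. ennreal (g y))) (\<lambda>y. Q ((x - y) / h))"
    and "(\<integral>y. Q ((x - y) / h) \<partial>density lborel (\<lambda>y. ennreal (g y))) = h * conv Q h g x"
proof -
  have Qm[measurable]: "Q \<in> borel_measurable borel" using Q by auto
  note gm[measurable]
  have aff: "(\<lambda>t. g (x + - h * t) * Q ((x - (x + - h * t)) / h)) = (\<lambda>t. Q t * g (x - h * t))"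
    using h by (auto simp: fun_eq_iff)
  have i1: "integrable lborel (\<lambda>y. g y * Q ((x - y) / h))"
    using lborel_integrable_real_affine_iff[of "- h" "\<lambda>y. g y * Q ((x - y) / h)" x] h
      conv_integrable_t[OF Q gm gb, of x h]
    unfolding aff by simp
  show "integrable (density lborel (\<lambda>y. ennreal (g y))) (\<lambda>y. Q ((x - y) / h))"
    using i1 g0 by (subst integrable_density) auto
  have "(\<integral>y. Q ((x - y) / h) \<partial>density lborel (\<lambda>y. ennreal (g y))) = (LINT y|lborel. g y * Q ((x - y) / h))"
    using g0 by (subst integral_density) auto
  also have "\<dots> = \<bar>- h\<bar> * (LINT t|lborel. g (x + - h * t) * Q ((x - (x + - h * t)) / h))"
    using lborel_integral_real_affine[of "- h" "\<lambda>y. g y * Q ((x - y) / h)" x] h by simp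
  also have "\<dots> = h * conv Q h g x"
    unfolding aff conv_def using h by simp
  finally show "(\<integral>y. Q ((x - y) / h) \<partial>density lborel (\<lambda>y. ennreal (g y))) = h * conv Q h g x" .
qed

lemma first_moment_zero:
  fixes K :: "real \<Rightarrow> real"
  assumes K_sym: "\<And>x. K (- x) = K x"
  shows "(LINT t|lborel. t * K t) = 0"
proof -
  have "(LINT t|lborel. t * K t) = \<bar>-1\<bar> *\<^sub>R (LINT t|lborel. (0 + -1 * t) * K (0 + -1 * t))"
    by (rule lborel_integral_real_affine) simp
  also have "\<dots> = - (LINT t|lborel. t * K t)" using K_sym by simp
  finally show ?thesis by simp
qed

lemma conv_taylor:
  fixes K g g1 g2 :: "real \<Rightarrow> real"
  assumes K_sym: "\<And>x. K (- x) = K x"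
    and K_int: "integrable lborel K" and K_one: "(LINT x|lborel. K x) = 1"
    and K_mom2: "integrable lborel (\<lambda>x. x\<^sup>2 * K x)"
    and d1: "\<And>x. (g has_real_derivative g1 x) (at x)" and d2: "\<And>x. (g1 has_real_derivative g2 x) (at x)"
    and b0: "\<And>x. \<bar>g x\<bar> \<le> B" and b2: "\<And>x. \<bar>g2 x\<bar> \<le> B"
  shows "\<bar>conv K h g x - g x\<bar> \<le> B * (LINT t|lborel. \<bar>t\<^sup>2 * K t\<bar>) * h\<^sup>2"
proof -
  have Km[measurable]: "K \<in> borel_measurable borel" using K_int by auto
  have gc: "continuous_on UNIV g" using d1 by (meson DERIV_isCont continuous_at_imp_continuous_on)
  have gm[measurable]: "g \<in> borel_measurable borel" using gc by (rule borel_measurable_continuous_onI)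
  have t1: "integrable lborel (\<lambda>t. t * K t)"
  proof (rule Bochner_Integration.integrable_bound[OF Bochner_Integration.integrable_add[OF integrable_abs[OF K_int] integrable_abs[OF K_mom2]]])
    show "(\<lambda>t. t * K t) \<in> borel_measurable lborel" by measurable
    show "AE t in lborel. norm (t * K t) \<le> norm (\<bar>K t\<bar> + \<bar>t\<^sup>2 * K t\<bar>)"
    proof (intro AE_I2)
      fix t :: real
      have "\<bar>t\<bar> \<le> 1 + t\<^sup>2"
      proof (cases "\<bar>t\<bar> \<le> 1")
        case True then show ?thesis using zero_le_power2[of t] by linarith
      next
        case False
        then have "\<bar>t\<bar> * 1 \<le> \<bar>t\<bar> * \<bar>t\<bar>" by (intro mult_left_mono) auto
        moreover have "\<bar>t\<bar> * \<bar>t\<bar> = t\<^sup>2" by (simp add: power2_eq_square)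
        ultimately show ?thesis by linarith
      qed
      then have "\<bar>t\<bar> * \<bar>K t\<bar> \<le> (1 + t\<^sup>2) * \<bar>K t\<bar>" by (rule mult_right_mono) simp
      then show "norm (t * K t) \<le> norm (\<bar>K t\<bar> + \<bar>t\<^sup>2 * K t\<bar>)" by (simp add: abs_mult algebra_simps)
    qed
  qed
  have ig: "integrable lborel (\<lambda>t. K t * g (x - h * t))" by (rule conv_integrable_t[OF K_int gm b0])
  define R where "R t = g (x - h * t) - g x + h * t * g1 x" for t
  have Rb: "\<bar>R t\<bar> \<le> B * (h * t)\<^sup>2" for t
    using taylor2[OF d1 d2 b2, of x "- h * t"] by (simp add: R_def algebra_simps)
  have iR: "integrable lborel (\<lambda>t. K t * R t)"
    unfolding R_def using ig K_int t1
  proof -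
    have "(\<lambda>t. K t * (g (x - h * t) - g x + h * t * g1 x)) = (\<lambda>t. K t * g (x - h * t) - g x * K t + (h * g1 x) * (t * K t))"
      by (simp add: algebra_simps fun_eq_iff)
    moreover have "integrable lborel (\<lambda>t. K t * g (x - h * t) - g x * K t + (h * g1 x) * (t * K t))"
      using ig K_int t1 by (intro Bochner_Integration.integrable_add Bochner_Integration.integrable_diff integrable_mult_right)
    ultimately show "integrable lborel (\<lambda>t. K t * (g (x - h * t) - g x + h * t * g1 x))" by simp
  qed
  have "conv K h g x - g x = (LINT t|lborel. K t * g (x - h * t)) - g x * (LINT t|lborel. K t)"
    using K_one by (simp add: conv_def)
  also have "\<dots> = (LINT t|lborel. K t * R t) - h * g1 x * (LINT t|lborel. t * K t)"
  proof -
    have "(LINT t|lborel. K t * R t) = (LINT t|lborel. K t * g (x - h * t) - g x * K t + (h * g1 x) * (t * K t))"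
      unfolding R_def by (simp add: algebra_simps)
    also have "\<dots> = (LINT t|lborel. K t * g (x - h * t)) - g x * (LINT t|lborel. K t) + (h * g1 x) * (LINT t|lborel. t * K t)"
      using ig K_int t1 by simp
    finally show ?thesis by simp
  qed
  also have "\<dots> = (LINT t|lborel. K t * R t)" using first_moment_zero[of K, OF K_sym] by simp
  finally have eq: "conv K h g x - g x = (LINT t|lborel. K t * R t)" .
  have "\<bar>LINT t|lborel. K t * R t\<bar> \<le> (LINT t|lborel. \<bar>K t * R t\<bar>)" by (rule integral_abs_bound)
  also have "\<dots> \<le> (LINT t|lborel. (B * h\<^sup>2) * \<bar>t\<^sup>2 * K t\<bar>)"
  proof (rule integral_mono)
    show "integrable lborel (\<lambda>t. \<bar>K t * R t\<bar>)" using iR by simp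
    show "integrable lborel (\<lambda>t. (B * h\<^sup>2) * \<bar>t\<^sup>2 * K t\<bar>)" using K_mom2 by simp
    fix t
    have "\<bar>K t * R t\<bar> = \<bar>K t\<bar> * \<bar>R t\<bar>" by (simp add: abs_mult)
    also have "\<dots> \<le> \<bar>K t\<bar> * (B * (h * t)\<^sup>2)" by (rule mult_left_mono[OF Rb]) simp
    also have "\<dots> = (B * h\<^sup>2) * \<bar>t\<^sup>2 * K t\<bar>" by (simp add: abs_mult power_mult_distrib algebra_simps)
    finally show "\<bar>K t * R t\<bar> \<le> (B * h\<^sup>2) * \<bar>t\<^sup>2 * K t\<bar>" .
  qed
  also have "\<dots> = B * (LINT t|lborel. \<bar>t\<^sup>2 * K t\<bar>) * h\<^sup>2" by simp
  finally show ?thesis using eq by simp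
qed


lemma integrable_sq_bdd:
  fixes u :: "real \<Rightarrow> real"
  assumes u: "integrable lborel u" and b: "\<And>x. \<bar>u x\<bar> \<le> B"
  shows "integrable lborel (\<lambda>x. (u x)\<^sup>2)"
proof -
  have "u \<in> borel_measurable borel" using u by auto
  then have "integrable lborel (\<lambda>x. u x * u x)" by (rule integrable_bdd_mult[OF u _ b])
  then show ?thesis by (simp add: power2_eq_square)
qed

lemma sm2_bounds:
  assumes "sm2 g"
  obtains g1 g2 B where "\<And>x. (g has_real_derivative g1 x) (at x)" "\<And>x. (g1 has_real_derivative g2 x) (at x)"
    "\<And>x. \<bar>g x\<bar> \<le> B" "\<And>x. \<bar>g2 x\<bar> \<le> B" "0 \<le> B"
proof -
  obtain g1 g2 B where g: "\<forall>x. (g has_real_derivative g1 x) (at x)" "\<forall>x. (g1 has_real_derivative g2 x) (at x)"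
    "\<forall>x. \<bar>g x\<bar> \<le> B \<and> \<bar>g1 x\<bar> \<le> B \<and> \<bar>g2 x\<bar> \<le> B" using assms unfolding sm2_def by blast
  have "0 \<le> B" using g(3) by (meson abs_ge_zero order_trans)
  then show ?thesis using g that by blast
qed

lemma sm2_meas: "sm2 g \<Longrightarrow> g \<in> borel_measurable borel"
  by (erule sm2_bounds) (meson DERIV_isCont borel_measurable_continuous_onI continuous_at_imp_continuous_on)

lemma sq_conv_bound:
  fixes K g :: "real \<Rightarrow> real"
  assumes K_sym: "\<And>x. K (- x) = K x"
    and K_int: "integrable lborel K" and K_one: "(LINT x|lborel. K x) = 1"
    and K_mom2: "integrable lborel (\<lambda>x. x\<^sup>2 * K x)"
    and sg: "sm2 g" and gi: "integrable lborel g"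
  shows "\<exists>E. \<forall>h. integrable lborel (\<lambda>x. (conv K h g x)\<^sup>2) \<and> integrable lborel (\<lambda>x. (g x)\<^sup>2) \<and>
     \<bar>(LINT x|lborel. (conv K h g x)\<^sup>2) - (LINT x|lborel. (g x)\<^sup>2)\<bar> \<le> E * h\<^sup>2"
proof -
  obtain g1 g2 B where d1: "\<And>x. (g has_real_derivative g1 x) (at x)" and d2: "\<And>x. (g1 has_real_derivative g2 x) (at x)"
    and b0: "\<And>x. \<bar>g x\<bar> \<le> B" and b2: "\<And>x. \<bar>g2 x\<bar> \<le> B" and B0: "0 \<le> B"
    using sm2_bounds[OF sg] by blast
  have gm: "g \<in> borel_measurable borel" using sm2_meas[OF sg] .
  define M2 where "M2 = (LINT t|lborel. \<bar>t\<^sup>2 * K t\<bar>)"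
  define nK where "nK = (LINT t|lborel. \<bar>K t\<bar>)"
  define ng where "ng = (LINT t|lborel. \<bar>g t\<bar>)"
  have M20: "0 \<le> M2" unfolding M2_def by simp
  have nK0: "0 \<le> nK" unfolding nK_def by simp
  have ng0: "0 \<le> ng" unfolding ng_def by simp
  show ?thesis
  proof (intro exI[of _ "B * M2 * (nK * ng + ng)"] allI conjI)
    fix h
    have ci: "integrable lborel (conv K h g)" by (rule conv_fubini(1)[OF K_int gi])
    have ca: "(LINT x|lborel. \<bar>conv K h g x\<bar>) \<le> nK * ng" unfolding nK_def ng_def by (rule conv_fubini(2)[OF K_int gi])
    have cb: "\<bar>conv K h g x\<bar> \<le> B * nK" for x unfolding nK_def by (rule conv_bdd[OF K_int gm b0])
    have tay: "\<bar>conv K h g x - g x\<bar> \<le> B * M2 * h\<^sup>2" for x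
      unfolding M2_def by (rule conv_taylor[OF K_sym K_int K_one K_mom2 d1 d2 b0 b2])
    show i1: "integrable lborel (\<lambda>x. (conv K h g x)\<^sup>2)" by (rule integrable_sq_bdd[OF ci cb])
    show i2: "integrable lborel (\<lambda>x. (g x)\<^sup>2)" by (rule integrable_sq_bdd[OF gi b0])
    have "\<bar>(LINT x|lborel. (conv K h g x)\<^sup>2) - (LINT x|lborel. (g x)\<^sup>2)\<bar> = \<bar>LINT x|lborel. (conv K h g x)\<^sup>2 - (g x)\<^sup>2\<bar>"
      using i1 i2 by simp
    also have "\<dots> \<le> (LINT x|lborel. \<bar>(conv K h g x)\<^sup>2 - (g x)\<^sup>2\<bar>)" by (rule integral_abs_bound)
    also have "\<dots> \<le> (LINT x|lborel. (B * M2 * h\<^sup>2) * (\<bar>conv K h g x\<bar> + \<bar>g x\<bar>))"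
    proof (rule integral_mono)
      show "integrable lborel (\<lambda>x. \<bar>(conv K h g x)\<^sup>2 - (g x)\<^sup>2\<bar>)" using i1 i2 by auto
      show "integrable lborel (\<lambda>x. (B * M2 * h\<^sup>2) * (\<bar>conv K h g x\<bar> + \<bar>g x\<bar>))"
        using ci gi by (intro integrable_mult_right Bochner_Integration.integrable_add integrable_abs)
      fix x
      have "\<bar>(conv K h g x)\<^sup>2 - (g x)\<^sup>2\<bar> = \<bar>conv K h g x - g x\<bar> * \<bar>conv K h g x + g x\<bar>"
        by (simp add: power2_eq_square abs_mult[symmetric] algebra_simps)
      also have "\<dots> \<le> (B * M2 * h\<^sup>2) * (\<bar>conv K h g x\<bar> + \<bar>g x\<bar>)"
        using tay[of x] by (intro mult_mono) (auto simp: abs_triangle_ineq)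
      finally show "\<bar>(conv K h g x)\<^sup>2 - (g x)\<^sup>2\<bar> \<le> (B * M2 * h\<^sup>2) * (\<bar>conv K h g x\<bar> + \<bar>g x\<bar>)" .
    qed
    also have "\<dots> = (B * M2 * h\<^sup>2) * ((LINT x|lborel. \<bar>conv K h g x\<bar>) + ng)"
      using ci gi unfolding ng_def by (simp add: Bochner_Integration.integral_add integrable_abs)
    also have "\<dots> \<le> (B * M2 * h\<^sup>2) * (nK * ng + ng)"
      using ca B0 M20 by (intro mult_left_mono) auto
    finally show "\<bar>(LINT x|lborel. (conv K h g x)\<^sup>2) - (LINT x|lborel. (g x)\<^sup>2)\<bar> \<le> B * M2 * (nK * ng + ng) * h\<^sup>2"
      by (simp add: algebra_simps)
  qed
qed


lemma beta_nat: "(LBINT p=0..1. p^a * (1-p)^b :: real) = fact a * fact b / fact (a+b+1)"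
proof -
  have h: "((\<lambda>t. t powr (real (a+1) - 1) * (1-t) powr (real (b+1) - 1)) has_integral Beta (real (a+1)) (real (b+1))) {0..1}"
    by (rule has_integral_Beta_real) auto
  have h2: "((\<lambda>t::real. t^a * (1-t)^b) has_integral Beta (real (a+1)) (real (b+1))) {0..1}"
  proof (rule has_integral_spike_finite[OF _ _ h, of "{0,1}"])
    fix t :: real assume "t \<in> {0..1} - {0,1}"
    then have "0 < t" "0 < 1 - t" by auto
    then show "t^a * (1-t)^b = t powr (real (a+1) - 1) * (1-t) powr (real (b+1) - 1)"
      by (simp add: powr_realpow)
  qed auto
  have "(LBINT p=0..1. p^a * (1-p)^b :: real) = integral {0..1} (\<lambda>t::real. t^a * (1-t)^b)"
    using interval_integral_eq_integral[of 0 1 "\<lambda>t::real. t^a * (1-t)^b"]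
    by (simp add: borel_integrable_atLeastAtMost' continuous_intros zero_ereal_def one_ereal_def)
  also have "\<dots> = Beta (real (a+1)) (real (b+1))" using h2 by (rule integral_unique)
  also have "\<dots> = fact a * fact b / fact (a+b+1)"
  proof -
    have g1: "Gamma (real (a+1)) = fact a" using Gamma_fact[of a, where 'a=real] by (simp add: add.commute)
    have g2: "Gamma (real (b+1)) = fact b" using Gamma_fact[of b, where 'a=real] by (simp add: add.commute)
    have g3: "Gamma (real (a+1) + real (b+1)) = fact (a+b+1)"
      using Gamma_fact[of "a+b+1", where 'a=real] by (simp add: add.commute add.left_commute)
    show ?thesis unfolding Beta_def g1 g2 g3 ..
  qed
  finally show ?thesis .
qed

lemma subst_beta:
  fixes f F :: "real \<Rightarrow> real"
  assumes f_nonneg: "\<And>x. 0 \<le> f x" and f_int: "integrable lborel f"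
    and f_cont: "\<And>x. isCont f x"
    and F0: "\<And>x. 0 \<le> F x" and F1: "\<And>x. F x \<le> 1"
    and Ftop: "(F \<longlongrightarrow> 1) at_top" and Fbot: "(F \<longlongrightarrow> 0) at_bot"
    and Fd: "\<And>x. (F has_real_derivative f x) (at x)"
  shows "(LINT x|lborel. F x ^ a * (1 - F x)^b * f x) = fact a * fact b / fact (a+b+1)"
proof -
  have fm[measurable]: "f \<in> borel_measurable borel" using f_int by auto
  have Fc: "\<And>x. isCont F x" using Fd DERIV_isCont by blast
  have Fm[measurable]: "F \<in> borel_measurable borel" using Fc by (intro borel_measurable_continuous_onI continuous_at_imp_continuous_on) auto
  have bnd: "\<bar>F x ^ a * (1 - F x)^b * f x\<bar> \<le> f x" for x
  proof -
    have "0 \<le> F x ^ a * (1 - F x)^b" using F0[of x] F1[of x] by simp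
    moreover have "F x ^ a * (1 - F x)^b \<le> 1" using F0[of x] F1[of x]
      by (intro mult_le_one power_le_one) auto
    ultimately show ?thesis using f_nonneg[of x] by (simp add: abs_mult mult_left_le_one_le)
  qed
  have int: "integrable lborel (\<lambda>x. F x ^ a * (1 - F x)^b * f x)"
    by (rule Bochner_Integration.integrable_bound[OF f_int]) (auto simp: bnd f_nonneg)
  have eint: "set_integrable lborel (einterval (-\<infinity>) \<infinity>) (\<lambda>x. F x ^ a * (1 - F x)^b * f x)"
    using int by (simp add: set_integrable_def einterval_def)
  have sub: "(LBINT p=ereal 0..ereal 1. p^a * (1-p)^b) = (LBINT x=-\<infinity>..\<infinity>. (F x ^ a * (1 - F x)^b) * f x)"
  proof (rule interval_integral_substitution_nonneg(2)[of "-\<infinity>" \<infinity> F f "\<lambda>p. p^a * (1-p)^b"])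
    show "((ereal \<circ> F \<circ> real_of_ereal) \<longlongrightarrow> ereal 0) (at_right (-\<infinity>))"
      using Fbot by (simp add: ereal_tendsto_simps o_assoc[symmetric])
    show "((ereal \<circ> F \<circ> real_of_ereal) \<longlongrightarrow> ereal 1) (at_left \<infinity>)"
      using Ftop by (simp add: ereal_tendsto_simps o_assoc[symmetric])
    show "set_integrable lborel (einterval (- \<infinity>) \<infinity>) (\<lambda>x. F x ^ a * (1 - F x) ^ b * f x)" by (rule eint)
  qed (auto simp: Fd f_cont F0 F1 f_nonneg intro!: continuous_intros)
  have "(LBINT x=-\<infinity>..\<infinity>. (F x ^ a * (1 - F x)^b) * f x) = (LINT x|lborel. F x ^ a * (1 - F x)^b * f x)"
    by (simp add: interval_lebesgue_integral_def einterval_def set_lebesgue_integral_def)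
  then show ?thesis using sub beta_nat[of a b] by (simp add: zero_ereal_def one_ereal_def)
qed


lemma ord_coef_sum:
  assumes "0 < s"
  shows "(\<Sum>u\<in>{1..s}. fact s / (fact (u-1) * fact (s-u)) * p^(u-1) * (1-p)^(s-u)) = (real s :: real)"
proof -
  obtain t where st: "s = Suc t" using assms by (cases s) auto
  have "(\<Sum>u\<in>{1..s}. fact s / (fact (u-1) * fact (s-u)) * p^(u-1) * (1-p)^(s-u))
      = (\<Sum>k\<in>{0..t}. fact s / (fact (Suc k-1) * fact (s-Suc k)) * p^(Suc k-1) * (1-p)^(s-Suc k))"
    unfolding st One_nat_def by (rule sum.shift_bounds_cl_Suc_ivl)
  also have "\<dots> = (\<Sum>k\<in>{0..t}. fact (Suc t) / (fact k * fact (t-k)) * p^k * (1-p)^(t-k))"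
    by (simp add: st)
  also have "\<dots> = (\<Sum>k\<in>{0..t}. real (Suc t) * (of_nat (t choose k) * p^k * (1-p)^(t-k)))"
  proof (rule sum.cong[OF refl])
    fix k assume "k \<in> {0..t}"
    then have "k \<le> t" by simp
    then show "fact (Suc t) / (fact k * fact (t-k)) * p^k * (1-p)^(t-k) = real (Suc t) * (of_nat (t choose k) * p^k * (1-p)^(t-k))"
      by (simp add: binomial_fact fact_Suc[of t] del: fact_Suc)
  qed
  also have "\<dots> = real (Suc t) * (\<Sum>k\<in>{0..t}. of_nat (t choose k) * p^k * (1-p)^(t-k))"
    by (simp add: sum_distrib_left)
  also have "(\<Sum>k\<in>{0..t}. of_nat (t choose k) * p^k * (1-p)^(t-k)) = (1::real)"
    using binomial_ring[of p "1-p" t] by (simp add: atLeast0AtMost)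
  finally show ?thesis using st by simp
qed

lemma blocks_sum:
  fixes k m :: nat
  shows "(\<Sum>h\<in>{1..k}. \<Sum>u\<in>{(h-1)*m+1..h*m}. g u) = (\<Sum>u\<in>{1..k*m}. (g u :: real))"
proof (induction k)
  case 0 then show ?case by simp
next
  case (Suc k)
  have un: "{1..Suc k * m} = {1..k*m} \<union> {k*m+1..Suc k*m}" by auto
  have "(\<Sum>h\<in>{1..Suc k}. \<Sum>u\<in>{(h-1)*m+1..h*m}. g u) = (\<Sum>h\<in>{1..k}. \<Sum>u\<in>{(h-1)*m+1..h*m}. g u) + (\<Sum>u\<in>{k*m+1..Suc k*m}. g u)"
    by simp
  also have "\<dots> = (\<Sum>u\<in>{1..k*m}. g u) + (\<Sum>u\<in>{k*m+1..Suc k*m}. g u)" using Suc by simp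
  also have "\<dots> = (\<Sum>u\<in>{1..Suc k * m}. g u)" unfolding un by (rule sum.union_disjoint[symmetric]) auto
  finally show ?case .
qed

lemma card_dblock: "1 \<le> h \<Longrightarrow> card (dblock s n h) = s div n"
  unfolding dblock_def by (cases h) (auto simp: algebra_simps)

lemma dblocks_sum:
  assumes "n dvd s"
  shows "(\<Sum>h\<in>{1..n}. \<Sum>u\<in>dblock s n h. g u) = (\<Sum>u\<in>{1..s}. (g u :: real))"
  using blocks_sum[where k=n and m="s div n" and g=g] assms unfolding dblock_def by simp

locale pros_setting =
  fixes f f' f'' :: "real \<Rightarrow> real" and s n :: nat and \<alpha> :: "nat \<Rightarrow> nat \<Rightarrow> real"
  assumes f_nonneg: "\<And>x. 0 \<le> f x"
    and f_int: "integrable lborel f"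
    and f_d1: "\<And>x. (f has_real_derivative f' x) (at x)"
    and f_d2: "\<And>x. (f' has_real_derivative f'' x) (at x)"
    and f_bdd: "bounded (range f)" and f'_bdd: "bounded (range f')"
    and f''_bdd: "bounded (range f'')"
    and F0: "\<And>x. 0 \<le> cdf_of f x" and F1: "\<And>x. cdf_of f x \<le> 1"
    and Fd: "\<And>x. (cdf_of f has_real_derivative f x) (at x)"
    and Ftop: "(cdf_of f \<longlongrightarrow> 1) at_top" and Fbot: "(cdf_of f \<longlongrightarrow> 0) at_bot"
    and s_pos: "0 < s" and n_pos: "0 < n" and m_int: "n dvd s"
    and alpha: "doubly_stochastic n \<alpha>"
begin

lemma bdd_abs: "bounded (range g) \<Longrightarrow> \<exists>B. \<forall>x. \<bar>g x\<bar> \<le> (B::real)"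
  by (auto simp: bounded_iff)

lemma sm2_f: "sm2 f"
proof -
  obtain B1 B2 B3 where b: "\<forall>x. \<bar>f x\<bar> \<le> B1" "\<forall>x. \<bar>f' x\<bar> \<le> B2" "\<forall>x. \<bar>f'' x\<bar> \<le> B3"
    using bdd_abs[OF f_bdd] bdd_abs[OF f'_bdd] bdd_abs[OF f''_bdd] by blast
  show ?thesis unfolding sm2_def
  proof (rule exI[of _ f'], rule exI[of _ f''], rule exI[of _ "B1 + B2 + B3"], intro conjI allI)
    fix x
    have n: "0 \<le> B1" "0 \<le> B2" "0 \<le> B3" using b[THEN spec, of 0] by (auto intro: order_trans[OF abs_ge_zero])
    show "\<bar>f x\<bar> \<le> B1 + B2 + B3" "\<bar>f' x\<bar> \<le> B1 + B2 + B3" "\<bar>f'' x\<bar> \<le> B1 + B2 + B3"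
      using b[THEN spec, of x] n by linarith+
  qed (use f_d1 f_d2 in auto)
qed

lemma sm2_F: "sm2 (cdf_of f)"
proof -
  obtain B1 B2 where b: "\<forall>x. \<bar>f x\<bar> \<le> B1" "\<forall>x. \<bar>f' x\<bar> \<le> B2"
    using bdd_abs[OF f_bdd] bdd_abs[OF f'_bdd] by blast
  show ?thesis unfolding sm2_def
  proof (rule exI[of _ f], rule exI[of _ f'], rule exI[of _ "1 + B1 + B2"], intro conjI allI)
    fix x
    have n: "0 \<le> B1" "0 \<le> B2" using b[THEN spec, of 0] by (auto intro: order_trans[OF abs_ge_zero])
    show "\<bar>cdf_of f x\<bar> \<le> 1 + B1 + B2" "\<bar>f x\<bar> \<le> 1 + B1 + B2" "\<bar>f' x\<bar> \<le> 1 + B1 + B2"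
      using b[THEN spec, of x] n F0[of x] F1[of x] by linarith+
  qed (use f_d1 Fd in auto)
qed

lemma sm2_ord: "sm2 (ord_stat_dens f s u)"
proof -
  have "sm2 (\<lambda>x. fact s / (fact (u - 1) * fact (s - u)) * (cdf_of f x) ^ (u - 1)
       * (1 - cdf_of f x) ^ (s - u) * f x)"
  proof -
    have "sm2 (\<lambda>x. 1 + (-1) * cdf_of f x)" by (intro sm2_add sm2_mult sm2_const sm2_F)
    then have "sm2 (\<lambda>x. 1 - cdf_of f x)" by simp
    then show ?thesis by (intro sm2_mult sm2_const sm2_pow sm2_F sm2_f)
  qed
  then show ?thesis by (simp add: ord_stat_dens_def[abs_def])
qed

lemma sm2_pros: "sm2 (pros_dens f s n \<alpha> j)"
  unfolding pros_dens_def[abs_def]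
  by (intro sm2_mult sm2_const sm2_sum sm2_ord) (auto simp: dblock_def)

lemma ord_nonneg: "0 \<le> ord_stat_dens f s u x"
  unfolding ord_stat_dens_def using F0[of x] F1[of x] f_nonneg[of x] by simp

lemma ord_le: "ord_stat_dens f s u x \<le> fact s / (fact (u - 1) * fact (s - u)) * f x"
proof -
  have "(cdf_of f x) ^ (u - 1) * (1 - cdf_of f x) ^ (s - u) \<le> 1"
    using F0[of x] F1[of x] by (intro mult_le_one power_le_one) auto
  then have "(cdf_of f x) ^ (u - 1) * (1 - cdf_of f x) ^ (s - u) * f x \<le> f x"
    using f_nonneg[of x] F0[of x] F1[of x] by (intro mult_left_le_one_le) auto
  then show ?thesis unfolding ord_stat_dens_def
    by (simp add: mult.assoc) (intro divide_right_mono mult_left_mono, auto)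
qed

lemma ord_sum: "(\<Sum>u\<in>{1..s}. ord_stat_dens f s u x) = real s * f x"
proof -
  have "(\<Sum>u\<in>{1..s}. ord_stat_dens f s u x) = (\<Sum>u\<in>{1..s}. fact s / (fact (u-1) * fact (s-u)) * (cdf_of f x)^(u-1) * (1-cdf_of f x)^(s-u)) * f x"
    unfolding ord_stat_dens_def sum_distrib_right ..
  then show ?thesis using ord_coef_sum[OF s_pos, of "cdf_of f x"] by simp
qed

lemma alpha_nonneg: "j \<in> {1..n} \<Longrightarrow> h \<in> {1..n} \<Longrightarrow> 0 \<le> \<alpha> j h"
  using alpha unfolding doubly_stochastic_def by auto

lemma pros_nonneg: "j \<in> {1..n} \<Longrightarrow> 0 \<le> pros_dens f s n \<alpha> j x"
  unfolding pros_dens_def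
  by (intro mult_nonneg_nonneg sum_nonneg) (auto intro!: mult_nonneg_nonneg alpha_nonneg ord_nonneg)

lemma s_eq: "real s = real n * real (s div n)"
  using m_int by (metis dvd_mult_div_cancel of_nat_mult)

lemma m_pos: "0 < s div n"
  using s_pos n_pos m_int by (metis dvd_mult_div_cancel gr0I mult_0_right)

lemma pros_sum: "(\<Sum>j\<in>{1..n}. pros_dens f s n \<alpha> j x) = real n * f x"
proof -
  have "(\<Sum>j\<in>{1..n}. pros_dens f s n \<alpha> j x)
      = (1 / real (s div n)) * (\<Sum>h\<in>{1..n}. \<Sum>u\<in>dblock s n h. (\<Sum>j\<in>{1..n}. \<alpha> j h) * ord_stat_dens f s u x)"
  proof -
    have "(\<Sum>j\<in>{1..n}. \<Sum>h\<in>{1..n}. \<Sum>u\<in>dblock s n h. \<alpha> j h * ord_stat_dens f s u x)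
       = (\<Sum>h\<in>{1..n}. \<Sum>j\<in>{1..n}. \<Sum>u\<in>dblock s n h. \<alpha> j h * ord_stat_dens f s u x)"
      by (rule sum.swap)
    also have "\<dots> = (\<Sum>h\<in>{1..n}. \<Sum>u\<in>dblock s n h. \<Sum>j\<in>{1..n}. \<alpha> j h * ord_stat_dens f s u x)"
      by (intro sum.cong refl sum.swap)
    also have "\<dots> = (\<Sum>h\<in>{1..n}. \<Sum>u\<in>dblock s n h. (\<Sum>j\<in>{1..n}. \<alpha> j h) * ord_stat_dens f s u x)"
      by (simp add: sum_distrib_right)
    finally show ?thesis unfolding pros_dens_def sum_distrib_left[symmetric] by simp
  qed
  also have "\<dots> = (1 / real (s div n)) * (\<Sum>h\<in>{1..n}. \<Sum>u\<in>dblock s n h. ord_stat_dens f s u x)"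
    using alpha unfolding doubly_stochastic_def by simp
  also have "\<dots> = (1 / real (s div n)) * (real s * f x)"
    unfolding dblocks_sum[OF m_int] ord_sum ..
  also have "\<dots> = real n * f x" using s_eq m_pos by simp
  finally show ?thesis .
qed

lemma pros_le: "j \<in> {1..n} \<Longrightarrow> pros_dens f s n \<alpha> j x \<le> real n * f x"
proof -
  assume j: "j \<in> {1..n}"
  have "pros_dens f s n \<alpha> j x \<le> (\<Sum>j\<in>{1..n}. pros_dens f s n \<alpha> j x)"
    using j by (intro member_le_sum pros_nonneg) auto
  then show ?thesis using pros_sum[of x] by linarith
qed


lemma f_cont: "isCont f x" using f_d1 DERIV_isCont by blast

lemma ord_int: assumes u: "1 \<le> u" "u \<le> s"
  shows "integrable lborel (ord_stat_dens f s u)" and "(LINT x|lborel. ord_stat_dens f s u x) = 1"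
proof -
  have om: "ord_stat_dens f s u \<in> borel_measurable borel" by (rule sm2_meas[OF sm2_ord])
  show i: "integrable lborel (ord_stat_dens f s u)"
  proof (rule Bochner_Integration.integrable_bound[OF integrable_mult_right[OF f_int, of "fact s / (fact (u - 1) * fact (s - u))"]])
    show "ord_stat_dens f s u \<in> borel_measurable lborel" using om by simp
    show "AE x in lborel. norm (ord_stat_dens f s u x) \<le> norm (fact s / (fact (u - 1) * fact (s - u)) * f x)"
      using ord_le ord_nonneg f_nonneg by (intro AE_I2) auto
  qed
  have "(LINT x|lborel. ord_stat_dens f s u x) = (fact s / (fact (u - 1) * fact (s - u))) * (LINT x|lborel. cdf_of f x ^ (u-1) * (1 - cdf_of f x)^(s-u) * f x)"
    unfolding ord_stat_dens_def by (simp add: mult.assoc)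
  also have "\<dots> = (fact s / (fact (u - 1) * fact (s - u))) * (fact (u-1) * fact (s-u) / fact (u-1+(s-u)+1))"
    by (subst subst_beta[OF f_nonneg f_int f_cont F0 F1 Ftop Fbot Fd]) simp
  also have "u-1+(s-u)+1 = s" using u by simp
  finally show "(LINT x|lborel. ord_stat_dens f s u x) = 1" by simp
qed

lemma dblock_range: "h \<in> {1..n} \<Longrightarrow> u \<in> dblock s n h \<Longrightarrow> 1 \<le> u \<and> u \<le> s"
proof -
  assume h: "h \<in> {1..n}" and u: "u \<in> dblock s n h"
  have "u \<le> h * (s div n)" using u by (simp add: dblock_def)
  also have "\<dots> \<le> n * (s div n)" using h by (intro mult_right_mono) auto
  also have "\<dots> = s" using m_int by simp
  finally show ?thesis using u by (simp add: dblock_def)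
qed

lemma pros_int: assumes j: "j \<in> {1..n}"
  shows "integrable lborel (pros_dens f s n \<alpha> j)" and "(LINT x|lborel. pros_dens f s n \<alpha> j x) = 1"
proof -
  have ii: "\<And>h u. h \<in> {1..n} \<Longrightarrow> u \<in> dblock s n h \<Longrightarrow> integrable lborel (\<lambda>x. \<alpha> j h * ord_stat_dens f s u x)"
    using ord_int(1) dblock_range by (intro integrable_mult_right) blast
  have i2: "integrable lborel (\<lambda>x. (\<Sum>h\<in>{1..n}. \<Sum>u\<in>dblock s n h. \<alpha> j h * ord_stat_dens f s u x))"
    using ii by (intro Bochner_Integration.integrable_sum) auto
  show "integrable lborel (pros_dens f s n \<alpha> j)"
    unfolding pros_dens_def[abs_def] by (rule integrable_mult_right[OF i2])
  have "(LINT x|lborel. pros_dens f s n \<alpha> j x) = (1 / real (s div n)) * (\<Sum>h\<in>{1..n}. \<Sum>u\<in>dblock s n h. \<alpha> j h * (LINT x|lborel. ord_stat_dens f s u x))"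
    unfolding pros_dens_def using ii
    by (simp add: Bochner_Integration.integral_sum Bochner_Integration.integrable_sum)
  also have "\<dots> = (1 / real (s div n)) * (\<Sum>h\<in>{1..n}. \<alpha> j h * real (s div n))"
  proof -
    have "\<And>h. h \<in> {1..n} \<Longrightarrow> (\<Sum>u\<in>dblock s n h. \<alpha> j h * (LINT x|lborel. ord_stat_dens f s u x)) = \<alpha> j h * real (s div n)"
      using ord_int(2) dblock_range card_dblock by simp
    then show ?thesis by simp
  qed
  also have "\<dots> = 1"
    using alpha j m_pos unfolding doubly_stochastic_def by (simp add: sum_distrib_right[symmetric])
  finally show "(LINT x|lborel. pros_dens f s n \<alpha> j x) = 1" .
qed

lemma pros_meas: "pros_dens f s n \<alpha> j \<in> borel_measurable borel"
  by (rule sm2_meas[OF sm2_pros])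

lemma prob_pros: assumes j: "j \<in> {1..n}" shows "prob_space (density lborel (\<lambda>x. ennreal (pros_dens f s n \<alpha> j x)))"
proof (rule prob_spaceI)
  have "emeasure (density lborel (\<lambda>x. ennreal (pros_dens f s n \<alpha> j x))) UNIV = (\<integral>\<^sup>+ x. ennreal (pros_dens f s n \<alpha> j x) \<partial>lborel)"
    using pros_meas by (simp add: emeasure_density)
  also have "\<dots> = ennreal 1"
    using nn_integral_eq_integral[OF pros_int(1)[OF j]] pros_int(2)[OF j] pros_nonneg[OF j] by simp
  finally show "emeasure (density lborel (\<lambda>x. ennreal (pros_dens f s n \<alpha> j x))) (space (density lborel (\<lambda>x. ennreal (pros_dens f s n \<alpha> j x)))) = 1" by simp
qed

lemma sf_pros: "sigma_finite_measure (density lborel (\<lambda>x. ennreal (pros_dens f s n \<alpha> j x)))"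
  using sigma_finite_measure.sigma_finite_iff_density_finite[OF sigma_finite_lborel, of "\<lambda>x. ennreal (pros_dens f s n \<alpha> j x)"] pros_meas by simp

end


lemma conv_sum:
  assumes "finite A" and "\<And>j. j \<in> A \<Longrightarrow> integrable lborel (\<lambda>t. Q t * g j (x - h * t))"
  shows "conv Q h (\<lambda>y. \<Sum>j\<in>A. g j y) x = (\<Sum>j\<in>A. conv Q h (g j) x)"
  unfolding conv_def using assms by (simp add: sum_distrib_left Bochner_Integration.integral_sum)

lemma conv_cmult: "conv Q h (\<lambda>y. c * g y) x = c * conv Q h g x"
  unfolding conv_def by (simp add: mult.left_commute)

lemma sum_pairs_const:
  "(\<Sum>l\<in>A \<times> B. G (fst l)) = real (card B) * (\<Sum>j\<in>A. (G j :: real))"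
proof -
  have 1: "(\<Sum>l\<in>A \<times> B. G (fst l)) = (\<Sum>x\<in>A. \<Sum>y\<in>B. G x)"
    using sum.cartesian_product[where g="\<lambda>x y. G x" and A=A and B=B] by (simp add: case_prod_unfold)
  have 2: "(\<Sum>x\<in>A. \<Sum>y\<in>B. G x) = (\<Sum>x\<in>A. real (card B) * G x)" by simp
  have 3: "(\<Sum>x\<in>A. real (card B) * G x) = real (card B) * (\<Sum>j\<in>A. G j)" by (simp add: sum_distrib_left)
  show ?thesis using 1 2 3 by simp
qed

context pros_setting
begin

lemma P_formula:
  fixes K :: "real \<Rightarrow> real" and h :: real and L :: nat
  assumes K_int: "integrable lborel K" and K_sq: "integrable lborel (\<lambda>x. (K x)\<^sup>2)"
    and h: "0 < h" and L: "1 \<le> L"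
  shows "(LINT X|pros_sample_measure f s n L \<alpha>. (kde_pros K n L h X x - f x)\<^sup>2)
    = (conv K h f x - f x)\<^sup>2 + conv (\<lambda>t. (K t)\<^sup>2) h f x / (real (n * L) * h)
      - (1 / (real n * real (n * L))) * (\<Sum>j\<in>{1..n}. (conv K h (pros_dens f s n \<alpha> j) x)\<^sup>2)"
proof -
  define I where "I = {1..n} \<times> {1..L}"
  define M where "M = (\<lambda>(j::nat, i::nat). density lborel (\<lambda>x. ennreal (pros_dens f s n \<alpha> j x)))"
  define N where "N = real n * real L"
  define c0 where "c0 = 1 / (N * h)"
  define \<phi> where "\<phi> = (\<lambda>(l::nat\<times>nat) (y::real). c0 * K ((x - y) / h))"
  define K2 where "K2 = (\<lambda>t. (K t)\<^sup>2)"
  have N0: "0 < N" using n_pos L unfolding N_def by simp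
  have finI: "finite I" unfolding I_def by simp
  have psf: "product_sigma_finite M"
  proof (rule product_sigma_finite.intro)
    fix l :: "nat \<times> nat"
    obtain j i where "l = (j, i)" by force
    then show "sigma_finite_measure (M l)" by (simp add: M_def sf_pros)
  qed
  have prI: "\<And>l. l \<in> I \<Longrightarrow> prob_space (M l)"
    by (auto simp: M_def I_def prob_pros)
  have bnd: "\<exists>B. \<forall>y. \<bar>pros_dens f s n \<alpha> j y\<bar> \<le> B" for j
    using sm2_bounds[OF sm2_pros[of j]] by metis
  have ci: "integrable lborel (\<lambda>t. Q t * pros_dens f s n \<alpha> j (x - h * t))" if Q: "integrable lborel Q" for Q j
  proof -
    obtain B where B: "\<And>y. \<bar>pros_dens f s n \<alpha> j y\<bar> \<le> B" using bnd[of j] by blast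
    show ?thesis by (rule conv_integrable_t[OF Q pros_meas B])
  qed
  have E1: "integrable (M l) (\<phi> l) \<and> (\<integral>y. \<phi> l y \<partial>M l) = c0 * (h * conv K h (pros_dens f s n \<alpha> (fst l)) x)" if l: "l \<in> I" for l
  proof -
    obtain j i where li: "l = (j, i)" by force
    have j: "j \<in> {1..n}" using l li by (auto simp: I_def)
    obtain B where B: "\<And>y. \<bar>pros_dens f s n \<alpha> j y\<bar> \<le> B" using bnd[of j] by blast
    note d = dens_expect[OF K_int pros_meas B pros_nonneg[OF j] h, of x]
    show ?thesis using d by (simp add: li M_def \<phi>_def)
  qed
  have E2: "integrable (M l) (\<lambda>y. (\<phi> l y)\<^sup>2) \<and> (\<integral>y. (\<phi> l y)\<^sup>2 \<partial>M l) = c0\<^sup>2 * (h * conv K2 h (pros_dens f s n \<alpha> (fst l)) x)" if l: "l \<in> I" for l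
  proof -
    obtain j i where li: "l = (j, i)" by force
    have j: "j \<in> {1..n}" using l li by (auto simp: I_def)
    obtain B where B: "\<And>y. \<bar>pros_dens f s n \<alpha> j y\<bar> \<le> B" using bnd[of j] by blast
    have K2i: "integrable lborel K2" using K_sq by (simp add: K2_def)
    note d = dens_expect[OF K2i pros_meas B pros_nonneg[OF j] h, of x]
    have eq: "(\<lambda>y. (\<phi> l y)\<^sup>2) = (\<lambda>y. c0\<^sup>2 * K2 ((x - y) / h))"
      by (simp add: \<phi>_def K2_def power_mult_distrib fun_eq_iff)
    show ?thesis using d unfolding eq by (simp add: li M_def)
  qed
  have kde: "kde_pros K n L h X x - f x = - f x + (\<Sum>l\<in>I. \<phi> l (X l))" for X
  proof -
    have "kde_pros K n L h X x = (\<Sum>j\<in>{1..n}. \<Sum>i\<in>{1..L}. c0 * K ((x - X (j, i)) / h))"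
      unfolding kde_pros_def c0_def N_def by (simp add: sum_distrib_left)
    also have "\<dots> = (\<Sum>l\<in>I. \<phi> l (X l))"
      unfolding I_def \<phi>_def by (simp add: sum.cartesian_product case_prod_unfold)
    finally show ?thesis by simp
  qed
  have "(LINT X|pros_sample_measure f s n L \<alpha>. (kde_pros K n L h X x - f x)\<^sup>2)
      = (\<integral>X. (- f x + (\<Sum>l\<in>I. \<phi> l (X l)))\<^sup>2 \<partial>PiM I M)"
    unfolding pros_sample_measure_def kde I_def M_def ..
  also have "\<dots> = (- f x + (\<Sum>l\<in>I. \<integral>y. \<phi> l y \<partial>M l))\<^sup>2 + (\<Sum>l\<in>I. (\<integral>y. (\<phi> l y)\<^sup>2 \<partial>M l) - (\<integral>y. \<phi> l y \<partial>M l)\<^sup>2)"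
    by (rule prod_sq_expect[OF psf finI prI]) (use E1 E2 in auto)
  also have "\<dots> = (- f x + (\<Sum>l\<in>I. c0 * (h * conv K h (pros_dens f s n \<alpha> (fst l)) x)))\<^sup>2
      + (\<Sum>l\<in>I. c0\<^sup>2 * (h * conv K2 h (pros_dens f s n \<alpha> (fst l)) x) - (c0 * (h * conv K h (pros_dens f s n \<alpha> (fst l)) x))\<^sup>2)"
    using E1 E2 by (simp cong: sum.cong)
  also have "\<dots> = (- f x + real L * (c0 * h) * (\<Sum>j\<in>{1..n}. conv K h (pros_dens f s n \<alpha> j) x))\<^sup>2
      + (real L * (c0\<^sup>2 * h) * (\<Sum>j\<in>{1..n}. conv K2 h (pros_dens f s n \<alpha> j) x) - real L * (c0 * h)\<^sup>2 * (\<Sum>j\<in>{1..n}. (conv K h (pros_dens f s n \<alpha> j) x)\<^sup>2))"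
  proof -
    have s1: "(\<Sum>l\<in>I. c0 * (h * conv K h (pros_dens f s n \<alpha> (fst l)) x)) = real L * (\<Sum>j\<in>{1..n}. c0 * (h * conv K h (pros_dens f s n \<alpha> j) x))"
      using sum_pairs_const[where G="\<lambda>j. c0 * (h * conv K h (pros_dens f s n \<alpha> j) x)" and A="{1..n}" and B="{1..L}"]
      unfolding I_def by simp
    have s2: "(\<Sum>l\<in>I. c0\<^sup>2 * (h * conv K2 h (pros_dens f s n \<alpha> (fst l)) x)) = real L * (\<Sum>j\<in>{1..n}. c0\<^sup>2 * (h * conv K2 h (pros_dens f s n \<alpha> j) x))"
      using sum_pairs_const[where G="\<lambda>j. c0\<^sup>2 * (h * conv K2 h (pros_dens f s n \<alpha> j) x)" and A="{1..n}" and B="{1..L}"]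
      unfolding I_def by simp
    have s3: "(\<Sum>l\<in>I. (c0 * (h * conv K h (pros_dens f s n \<alpha> (fst l)) x))\<^sup>2) = real L * (\<Sum>j\<in>{1..n}. (c0 * (h * conv K h (pros_dens f s n \<alpha> j) x))\<^sup>2)"
      using sum_pairs_const[where G="\<lambda>j. (c0 * (h * conv K h (pros_dens f s n \<alpha> j) x))\<^sup>2" and A="{1..n}" and B="{1..L}"]
      unfolding I_def by simp
    show ?thesis
      by (simp only: sum_subtractf s1 s2 s3) (simp add: sum_distrib_left power_mult_distrib mult.assoc)
  qed
  also have "(\<Sum>j\<in>{1..n}. conv K h (pros_dens f s n \<alpha> j) x) = real n * conv K h f x"
  proof -
    have "(\<Sum>j\<in>{1..n}. conv K h (pros_dens f s n \<alpha> j) x) = conv K h (\<lambda>y. \<Sum>j\<in>{1..n}. pros_dens f s n \<alpha> j y) x"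
      by (intro conv_sum[symmetric] ci K_int) auto
    also have "\<dots> = real n * conv K h f x" unfolding pros_sum conv_cmult ..
    finally show ?thesis .
  qed
  also have "(\<Sum>j\<in>{1..n}. conv K2 h (pros_dens f s n \<alpha> j) x) = real n * conv K2 h f x"
  proof -
    have K2i: "integrable lborel K2" using K_sq by (simp add: K2_def)
    have "(\<Sum>j\<in>{1..n}. conv K2 h (pros_dens f s n \<alpha> j) x) = conv K2 h (\<lambda>y. \<Sum>j\<in>{1..n}. pros_dens f s n \<alpha> j y) x"
      by (intro conv_sum[symmetric] ci K2i) auto
    also have "\<dots> = real n * conv K2 h f x" unfolding pros_sum conv_cmult ..
    finally show ?thesis .
  qed
  finally have eq: "(LINT X|pros_sample_measure f s n L \<alpha>. (kde_pros K n L h X x - f x)\<^sup>2) =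
    (- f x + real L * (c0 * h) * (real n * conv K h f x))\<^sup>2 +
    (real L * (c0\<^sup>2 * h) * (real n * conv K2 h f x) - real L * (c0 * h)\<^sup>2 * (\<Sum>j\<in>{1..n}. (conv K h (pros_dens f s n \<alpha> j) x)\<^sup>2))" .
  have a1: "real L * (c0 * h) * real n = 1" using N0 h n_pos L unfolding c0_def N_def by (simp add: field_simps)
  have a2: "real L * (c0\<^sup>2 * h) * real n = 1 / (real (n * L) * h)" using N0 h n_pos L unfolding c0_def N_def by (simp add: field_simps power2_eq_square)
  have a3: "real L * (c0 * h)\<^sup>2 = 1 / (real n * real (n * L))" using N0 h n_pos L unfolding c0_def N_def by (simp add: field_simps power2_eq_square)
  have r1: "real L * (c0 * h) * (real n * z) = z" for z
  proof -
    have "real L * (c0 * h) * (real n * z) = (real L * (c0 * h) * real n) * z" by (simp add: ac_simps)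
    then show ?thesis using a1 by simp
  qed
  have r2: "real L * (c0\<^sup>2 * h) * (real n * z) = z / (real (n * L) * h)" for z
  proof -
    have "real L * (c0\<^sup>2 * h) * (real n * z) = (real L * (c0\<^sup>2 * h) * real n) * z" by (simp add: ac_simps)
    then show ?thesis using a2 by simp
  qed
  show ?thesis unfolding eq r1 r2 a3 K2_def by (simp add: algebra_simps)
qed

end


lemma S_formula:
  fixes K f :: "real \<Rightarrow> real" and h :: real and N :: nat
  assumes K_int: "integrable lborel K" and K_sq: "integrable lborel (\<lambda>x. (K x)\<^sup>2)"
    and h: "0 < h" and N: "1 \<le> N"
    and fm: "f \<in> borel_measurable borel" and fb: "\<And>y. \<bar>f y\<bar> \<le> B" and f0: "\<And>y. 0 \<le> f y"
    and pf: "prob_space (density lborel (\<lambda>x. ennreal (f x)))"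
  shows "(LINT X|srs_sample_measure f N. (kde_srs K N h X x - f x)\<^sup>2)
    = (conv K h f x - f x)\<^sup>2 + conv (\<lambda>t. (K t)\<^sup>2) h f x / (real N * h)
      - (1 / real N) * (conv K h f x)\<^sup>2"
proof -
  define I where "I = {1..N}"
  define M where "M = (\<lambda>i::nat. density lborel (\<lambda>x. ennreal (f x)))"
  define c0 where "c0 = 1 / (real N * h)"
  define \<phi> where "\<phi> = (\<lambda>(l::nat) (y::real). c0 * K ((x - y) / h))"
  define K2 where "K2 = (\<lambda>t. (K t)\<^sup>2)"
  have K2i: "integrable lborel K2" using K_sq by (simp add: K2_def)
  have N0: "0 < real N" using N by simp
  have finI: "finite I" unfolding I_def by simp
  have sf: "sigma_finite_measure (density lborel (\<lambda>x. ennreal (f x)))"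
    using sigma_finite_measure.sigma_finite_iff_density_finite[OF sigma_finite_lborel, of "\<lambda>x. ennreal (f x)"] fm by simp
  have psf: "product_sigma_finite M"
    by (rule product_sigma_finite.intro) (simp add: M_def sf)
  have prI: "\<And>l. l \<in> I \<Longrightarrow> prob_space (M l)" by (simp add: M_def pf)
  note d1 = dens_expect[OF K_int fm fb f0 h, of x]
  note d2 = dens_expect[OF K2i fm fb f0 h, of x]
  have E1: "integrable (M l) (\<phi> l) \<and> (\<integral>y. \<phi> l y \<partial>M l) = c0 * (h * conv K h f x)" for l
    using d1 by (simp add: M_def \<phi>_def)
  have eq2: "(\<lambda>y. (\<phi> l y)\<^sup>2) = (\<lambda>y. c0\<^sup>2 * K2 ((x - y) / h))" for l
    by (simp add: \<phi>_def K2_def power_mult_distrib fun_eq_iff)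
  have E2: "integrable (M l) (\<lambda>y. (\<phi> l y)\<^sup>2) \<and> (\<integral>y. (\<phi> l y)\<^sup>2 \<partial>M l) = c0\<^sup>2 * (h * conv K2 h f x)" for l
    using d2 unfolding eq2 by (simp add: M_def)
  have kde: "kde_srs K N h X x - f x = - f x + (\<Sum>l\<in>I. \<phi> l (X l))" for X
    unfolding kde_srs_def c0_def I_def \<phi>_def by (simp add: sum_distrib_left)
  have "(LINT X|srs_sample_measure f N. (kde_srs K N h X x - f x)\<^sup>2)
      = (\<integral>X. (- f x + (\<Sum>l\<in>I. \<phi> l (X l)))\<^sup>2 \<partial>PiM I M)"
    unfolding srs_sample_measure_def kde I_def M_def ..
  also have "\<dots> = (- f x + (\<Sum>l\<in>I. \<integral>y. \<phi> l y \<partial>M l))\<^sup>2 + (\<Sum>l\<in>I. (\<integral>y. (\<phi> l y)\<^sup>2 \<partial>M l) - (\<integral>y. \<phi> l y \<partial>M l)\<^sup>2)"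
    by (rule prod_sq_expect[OF psf finI prI]) (use E1 E2 in auto)
  also have "\<dots> = (- f x + real N * (c0 * (h * conv K h f x)))\<^sup>2 + real N * (c0\<^sup>2 * (h * conv K2 h f x) - (c0 * (h * conv K h f x))\<^sup>2)"
    using E1 E2 by (simp add: I_def)
  also have "\<dots> = (conv K h f x - f x)\<^sup>2 + conv K2 h f x / (real N * h) - (1 / real N) * (conv K h f x)\<^sup>2"
    using N0 h unfolding c0_def by (simp add: field_simps power2_eq_square)
  finally show ?thesis unfolding K2_def .
qed


theorem theorem3p2:
  fixes f f' f'' K :: "real \<Rightarrow> real" and s n :: nat and \<alpha> :: "nat \<Rightarrow> nat \<Rightarrow> real"
  assumes f_nonneg: "\<And>x. 0 \<le> f x"
    and f_int: "integrable lborel f" and f_one: "(LINT x|lborel. f x) = 1"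
    and f_d1: "\<And>x. (f has_real_derivative f' x) (at x)"
    and f_d2: "\<And>x. (f' has_real_derivative f'' x) (at x)"
    and f''_cont: "continuous_on UNIV f''"
    and f_bdd: "bounded (range f)" and f'_bdd: "bounded (range f')"
    and f''_bdd: "bounded (range f'')"
    and s_pos: "0 < s" and n_pos: "0 < n" and m_int: "n dvd s"
    and alpha: "doubly_stochastic n \<alpha>"
    and K_sym: "\<And>x. K (- x) = K x"
    and K_int: "integrable lborel K" and K_one: "(LINT x|lborel. K x) = 1"
    and K_sq: "integrable lborel (\<lambda>x. (K x)\<^sup>2)"
    and K_mom2: "integrable lborel (\<lambda>x. x\<^sup>2 * K x)"
  shows "\<exists>C h0. 0 < h0 \<and> (\<forall>h L. 0 < h \<longrightarrow> h < h0 \<longrightarrow> 1 \<le> L \<longrightarrow>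
           \<bar>MISE_pros f K s n L \<alpha> h
              - (MISE_srs f K (n * L) h - Delta_pros f s n \<alpha> / real (n * L))\<bar>
           \<le> C * h\<^sup>2 / real (n * L))"
proof -
  have f_cont: "\<And>x. isCont f x" using f_d1 DERIV_isCont by blast
  note cp = cdf_props[OF f_nonneg f_int f_one f_cont]
  interpret pros_setting f f' f'' s n \<alpha>
    by (rule pros_setting.intro[OF f_nonneg f_int f_d1 f_d2 f_bdd f'_bdd f''_bdd cp(2) cp(3) cp(6) cp(4) cp(5) s_pos n_pos m_int alpha])
  obtain g1 g2 Bf where Bf: "\<And>x. \<bar>f x\<bar> \<le> Bf" using sm2_bounds[OF sm2_f] by metis
  have fm: "f \<in> borel_measurable borel" using f_int by auto
  define K2 where "K2 = (\<lambda>t. (K t)\<^sup>2)"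
  have K2i: "integrable lborel K2" using K_sq by (simp add: K2_def)
  obtain Ef where Ef: "\<And>h. integrable lborel (\<lambda>x. (conv K h f x)\<^sup>2) \<and> integrable lborel (\<lambda>x. (f x)\<^sup>2) \<and>
     \<bar>(LINT x|lborel. (conv K h f x)\<^sup>2) - (LINT x|lborel. (f x)\<^sup>2)\<bar> \<le> Ef * h\<^sup>2"
    using sq_conv_bound[OF K_sym K_int K_one K_mom2 sm2_f f_int] by blast
  have "\<forall>j\<in>{1..n}. \<exists>E. \<forall>h. integrable lborel (\<lambda>x. (conv K h (pros_dens f s n \<alpha> j) x)\<^sup>2) \<and> integrable lborel (\<lambda>x. (pros_dens f s n \<alpha> j x)\<^sup>2) \<and>
     \<bar>(LINT x|lborel. (conv K h (pros_dens f s n \<alpha> j) x)\<^sup>2) - (LINT x|lborel. (pros_dens f s n \<alpha> j x)\<^sup>2)\<bar> \<le> E * h\<^sup>2"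
    using sq_conv_bound[OF K_sym K_int K_one K_mom2 sm2_pros pros_int(1)] by blast
  then obtain Ej where Ej: "\<And>j h. j \<in> {1..n} \<Longrightarrow> integrable lborel (\<lambda>x. (conv K h (pros_dens f s n \<alpha> j) x)\<^sup>2) \<and> integrable lborel (\<lambda>x. (pros_dens f s n \<alpha> j x)\<^sup>2) \<and>
     \<bar>(LINT x|lborel. (conv K h (pros_dens f s n \<alpha> j) x)\<^sup>2) - (LINT x|lborel. (pros_dens f s n \<alpha> j x)\<^sup>2)\<bar> \<le> Ej j * h\<^sup>2"
    by metis
  define C where "C = (\<Sum>j\<in>{1..n}. \<bar>Ej j\<bar>) / real n + \<bar>Ef\<bar>"
  show ?thesis
  proof (rule exI[of _ C], rule exI[of _ 1], intro conjI allI impI)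
    show "(0::real) < 1" by simp
    fix h :: real and L :: nat
    assume h: "0 < h" and h1: "h < 1" and L: "1 \<le> L"
    define N where "N = real (n * L)"
    have N0: "0 < N" using n_pos L by (simp add: N_def)
    have NL: "1 \<le> n * L" using n_pos L by (simp add: Suc_le_eq)
    define A where "A x = (conv K h f x - f x)\<^sup>2 + conv K2 h f x / (N * h)" for x
    define cj where "cj j x = (conv K h (pros_dens f s n \<alpha> j) x)\<^sup>2" for j x
    have P: "(LINT X|pros_sample_measure f s n L \<alpha>. (kde_pros K n L h X x - f x)\<^sup>2) = A x - (1 / (real n * N)) * (\<Sum>j\<in>{1..n}. cj j x)" for x
      using P_formula[OF K_int K_sq h L, of x] unfolding A_def cj_def N_def K2_def by simp
    have S: "(LINT X|srs_sample_measure f (n * L). (kde_srs K (n * L) h X (x::real) - f x)\<^sup>2) = A x - (1 / N) * (conv K h f x)\<^sup>2" for x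
      using S_formula[OF K_int K_sq h NL fm Bf f_nonneg cp(1), of x] unfolding A_def N_def K2_def by simp
    have ci: "integrable lborel (conv K h f)" by (rule conv_fubini(1)[OF K_int f_int])
    have cb: "\<bar>conv K h f x\<bar> \<le> Bf * (LINT t|lborel. \<bar>K t\<bar>)" for x by (rule conv_bdd[OF K_int fm Bf])
    have Ai: "integrable lborel A"
    proof -
      have d: "integrable lborel (\<lambda>x. conv K h f x - f x)" using ci f_int by (rule Bochner_Integration.integrable_diff)
      have db: "\<bar>conv K h f x - f x\<bar> \<le> Bf * (LINT t|lborel. \<bar>K t\<bar>) + Bf" for x using cb[of x] Bf[of x] by linarith
      have "integrable lborel (\<lambda>x. (conv K h f x - f x)\<^sup>2)" by (rule integrable_sq_bdd[OF d db])
      moreover have "integrable lborel (\<lambda>x. conv K2 h f x / (N * h))" using conv_fubini(1)[OF K2i f_int] by simp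
      ultimately show ?thesis unfolding A_def[abs_def] by (rule Bochner_Integration.integrable_add)
    qed
    have cji: "j \<in> {1..n} \<Longrightarrow> integrable lborel (cj j)" for j using Ej[of j h] by (simp add: cj_def[abs_def])
    have MP: "MISE_pros f K s n L \<alpha> h = (LINT x|lborel. A x) - (1 / (real n * N)) * (\<Sum>j\<in>{1..n}. (LINT x|lborel. cj j x))"
    proof -
      have si: "integrable lborel (\<lambda>x. \<Sum>j\<in>{1..n}. cj j x)"
        by (rule Bochner_Integration.integrable_sum, rule cji, assumption)
      have "(LINT x|lborel. A x - (1 / (real n * N)) * (\<Sum>j\<in>{1..n}. cj j x)) = (LINT x|lborel. A x) - (LINT x|lborel. (1 / (real n * N)) * (\<Sum>j\<in>{1..n}. cj j x))"
        by (rule Bochner_Integration.integral_diff[OF Ai integrable_mult_right[OF si]])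
      also have "(LINT x|lborel. (1 / (real n * N)) * (\<Sum>j\<in>{1..n}. cj j x)) = (1 / (real n * N)) * (\<Sum>j\<in>{1..n}. (LINT x|lborel. cj j x))"
        by (simp only: integral_mult_right_zero Bochner_Integration.integral_sum[OF cji])
      finally show ?thesis unfolding MISE_pros_def P .
    qed
    have MS: "MISE_srs f K (n * L) h = (LINT x|lborel. A x) - (1 / N) * (LINT x|lborel. (conv K h f x)\<^sup>2)"
      unfolding MISE_srs_def S using Ai Ef[of h] by simp
    have fji: "j \<in> {1..n} \<Longrightarrow> integrable lborel (\<lambda>x. (pros_dens f s n \<alpha> j x)\<^sup>2)" for j using Ej[of j h] by simp
    have DD: "Delta_pros f s n \<alpha> = (1 / real n) * (\<Sum>j\<in>{1..n}. (LINT x|lborel. (pros_dens f s n \<alpha> j x)\<^sup>2)) - (LINT x|lborel. (f x)\<^sup>2)"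
    proof -
      have si: "integrable lborel (\<lambda>x. \<Sum>j\<in>{1..n}. (pros_dens f s n \<alpha> j x)\<^sup>2)"
        by (rule Bochner_Integration.integrable_sum, rule fji, assumption)
      have f2: "integrable lborel (\<lambda>x. (f x)\<^sup>2)" using Ef[of h] by blast
      have "(LINT x|lborel. (1 / real n) * (\<Sum>j\<in>{1..n}. (pros_dens f s n \<alpha> j x)\<^sup>2) - (f x)\<^sup>2)
          = (LINT x|lborel. (1 / real n) * (\<Sum>j\<in>{1..n}. (pros_dens f s n \<alpha> j x)\<^sup>2)) - (LINT x|lborel. (f x)\<^sup>2)"
        by (rule Bochner_Integration.integral_diff[OF integrable_mult_right[OF si] f2])
      also have "(LINT x|lborel. (1 / real n) * (\<Sum>j\<in>{1..n}. (pros_dens f s n \<alpha> j x)\<^sup>2)) = (1 / real n) * (\<Sum>j\<in>{1..n}. (LINT x|lborel. (pros_dens f s n \<alpha> j x)\<^sup>2))"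
        by (simp only: integral_mult_right_zero Bochner_Integration.integral_sum[OF fji])
      finally show ?thesis unfolding Delta_pros_def .
    qed
    define Dj where "Dj j = (LINT x|lborel. cj j x) - (LINT x|lborel. (pros_dens f s n \<alpha> j x)\<^sup>2)" for j
    define Df where "Df = (LINT x|lborel. (conv K h f x)\<^sup>2) - (LINT x|lborel. (f x)\<^sup>2)"
    have key: "MISE_pros f K s n L \<alpha> h - (MISE_srs f K (n * L) h - Delta_pros f s n \<alpha> / real (n * L))
        = (Df - (\<Sum>j\<in>{1..n}. Dj j) / real n) / N"
    proof -
      have "(\<Sum>j\<in>{1..n}. Dj j) = (\<Sum>j\<in>{1..n}. (LINT x|lborel. cj j x)) - (\<Sum>j\<in>{1..n}. (LINT x|lborel. (pros_dens f s n \<alpha> j x)\<^sup>2))"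
        unfolding Dj_def by (rule sum_subtractf)
      moreover have alg: "(a - (1/(real n*N))*SC) - ((a - (1/N)*b) - ((1/real n)*SF - c)/N) = ((b - c) - (SC - SF)/real n)/N" for a b c SC SF
        using N0 n_pos by (simp add: field_simps)
      ultimately show ?thesis unfolding MP MS DD Df_def N_def[symmetric] by (simp only: alg)
    qed
    have bj: "\<bar>Dj j\<bar> \<le> \<bar>Ej j\<bar> * h\<^sup>2" if "j \<in> {1..n}" for j
      using Ej[OF that, of h] unfolding Dj_def cj_def
      by (meson abs_ge_self mult_right_mono order_trans zero_le_power2)
    have bf: "\<bar>Df\<bar> \<le> \<bar>Ef\<bar> * h\<^sup>2" using Ef[of h] unfolding Df_def
      by (meson abs_ge_self mult_right_mono order_trans zero_le_power2)
    have "\<bar>Df - (\<Sum>j\<in>{1..n}. Dj j) / real n\<bar> \<le> \<bar>Df\<bar> + \<bar>\<Sum>j\<in>{1..n}. Dj j\<bar> / real n"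
      using abs_triangle_ineq4[of Df "(\<Sum>j\<in>{1..n}. Dj j) / real n"] n_pos by (simp add: abs_divide)
    also have "\<bar>\<Sum>j\<in>{1..n}. Dj j\<bar> \<le> (\<Sum>j\<in>{1..n}. \<bar>Ej j\<bar>) * h\<^sup>2"
    proof -
      have "\<bar>\<Sum>j\<in>{1..n}. Dj j\<bar> \<le> (\<Sum>j\<in>{1..n}. \<bar>Dj j\<bar>)" by (rule sum_abs)
      also have "\<dots> \<le> (\<Sum>j\<in>{1..n}. \<bar>Ej j\<bar> * h\<^sup>2)" by (intro sum_mono bj)
      finally show ?thesis by (simp add: sum_distrib_right)
    qed
    then have "\<bar>Df\<bar> + \<bar>\<Sum>j\<in>{1..n}. Dj j\<bar> / real n \<le> \<bar>Ef\<bar> * h\<^sup>2 + (\<Sum>j\<in>{1..n}. \<bar>Ej j\<bar>) * h\<^sup>2 / real n"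
      using bf n_pos by (intro add_mono divide_right_mono) auto
    finally have fin: "\<bar>Df - (\<Sum>j\<in>{1..n}. Dj j) / real n\<bar> \<le> C * h\<^sup>2"
      unfolding C_def by (simp add: algebra_simps add_divide_distrib)
    show "\<bar>MISE_pros f K s n L \<alpha> h - (MISE_srs f K (n * L) h - Delta_pros f s n \<alpha> / real (n * L))\<bar> \<le> C * h\<^sup>2 / real (n * L)"
    proof -
      have "\<bar>MISE_pros f K s n L \<alpha> h - (MISE_srs f K (n * L) h - Delta_pros f s n \<alpha> / real (n * L))\<bar>
          = \<bar>(Df - (\<Sum>j\<in>{1..n}. Dj j) / real n) / N\<bar>" by (simp only: key)
      also have "\<dots> = \<bar>Df - (\<Sum>j\<in>{1..n}. Dj j) / real n\<bar> / N" using N0 by (simp add: abs_divide)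
      also have "\<dots> \<le> C * h\<^sup>2 / N" using fin N0 by (simp add: divide_right_mono)
      finally show ?thesis unfolding N_def .
    qed
  qed
qed

end
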